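(* Consider the noiseless model and assume (F'). For $\ell<0$, $\mathcal V_n(\ell)$ is the law of $$\sum_{k=0}^{N_0(n)}\Big(2\sum_{j=k}^{N_0(n)}\lambda_j(n)E_j\Big)^{1/2}\mathbf 1_{\{Z=k\}},$$ where $E_0,\dots,E_{N_0(n)}$ are i.i.d. mean-one exponential random variables, and $Z$ is an independent random variable with $P(Z=j)=p_j(n,\ell)$ for $j\in\{0,\dots,N_0(n)\}$.
   Context: **Discrete processes with memory.** Fix $n\ge2$ and let $\mathcal D_n=\{0,\dots,n\}$, with reals $v_j(n)$ and rate functions $a_{ij}:\mathbb R\to[0,\infty)$. The process $(X_n,L_n)$ on $\mathcal D_n\times\mathbb R$ is built as follows. - Set $T_0=0$. - If $X_n(T_k)=x$ and $L_n(T_k)=y$, let $T^j_{k+1}=\inf\{t>T_k:\int_{T_k}^ta_{xj}(y+v_x(n)(s-T_k))ds\ge E^j_k\}$, where the $E^j_k$ are i.i.d. mean-one exponentials independent of the initial state. Let $T_{k+1}=\min_jT^j_{k+1}$. - On $[T_k,T_{k+1})$, $X_n=x$ and $L_n(s)=y+v_x(n)(s-T_k)$; then $X_n(T_{k+1})$ is the minimizing $j$. **Noiseless model.** There are integers $0\le N_0(n),N_1(n)<n/2$ with $N_k(n)/n\to0$. - Boundary layers: $\partial\mathcal D_n^-=\{0,\dots,N_0(n)\}$ and $\partial\mathcal D_n^+=\{n-N_1(n),\dots,n\}$. - Memory rates: $v_j(n)>0$ on $\partial\mathcal D_n^-$, $<0$ on $\partial\mathcal D_n^+$, and $0$ elsewhere,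 with $\sum_{j=0}^{N_0(n)}v_j(n)=\sum_{j=0}^{N_1(n)}|v_{n-j}(n)|=n$. - Jump rates: $a_{ij}\equiv0$ for $|i-j|\ne1$, and $a_{i,i+1}(\ell)=c_i(n)\max(\ell,0)$, $a_{i+1,i}(\ell)=c_i(n)\max(-\ell,0)$ for $0\le i\le n-1$, where - $c_i(n)=\sum_{m=0}^iv_m(n)$ for $i\le N_0(n)$, - $c_i(n)=n$ for $N_0(n)\le i\le n-N_1(n)-1$, - $c_{n-1-i}(n)=\sum_{m=0}^i|v_{n-m}(n)|$ for $0\le i\le N_1(n)$. - Ratios: $\lambda_i(n)=v_i(n)/c_i(n)$ for $0\le i\le N_0(n)$, and $\mu_i(n)=v_{i+1}(n)/c_i(n)$ for $0\le i<N_0(n)$. - Condition (F'): $v_j(n)\ge v_{j+1}(n)>0$ for $0\le j\le N_0(n)-1$. **Reversal and exit quantities.** Start from $X_n(0)=N_0(n)$, $L_n(0)=\ell<0$. Let $\mathcal T_n=\inf\{t\ge0:L_n(t)\ge0\}$, $G_n=X_n(\mathcal T_n)$, $\mathcal U_n=\inf\{t\ge\mathcal T_n:X_n(t)\notin\partial\mathcal D_n^-\}$, and $p_j(n,\ell)=P(G_n=j)$. Let $\mathcal V_n(\ell)$ be the law of $L_n(\mathcal U_n)$. *)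

theory Defs
  imports "HOL-Probability.Probability"
begin

text \<open>Clock for a single target: given the rate function r = a_{xj}, the current memory y,
  the memory rate w = v_x and the exponential variable e, this is
  inf {t > 0. integral_0^t r(y + w s) ds >= e} (relative to the current jump time),
  and infinity if the set is empty.\<close>
definition clock :: "(real \<Rightarrow> real) \<Rightarrow> real \<Rightarrow> real \<Rightarrow> real \<Rightarrow> ereal" where
  "clock r y w e =
     (if {t::real. 0 < t \<and> e \<le> integral {0..t} (\<lambda>s. r (y + w * s))} = {} then \<infinity>
      else ereal (Inf {t::real. 0 < t \<and> e \<le> integral {0..t} (\<lambda>s. r (y + w * s))}))"

definition hold :: "nat \<Rightarrow> (nat \<Rightarrow> nat \<Rightarrow> real \<Rightarrow> real) \<Rightarrow> (nat \<Rightarrow> real)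
    \<Rightarrow> nat \<Rightarrow> real \<Rightarrow> (nat \<Rightarrow> real) \<Rightarrow> ereal" where
  "hold n a v x y e = Min ((\<lambda>j. clock (a x j) y (v x) (e j)) ` {0..n})"

text \<open>The minimizing target (ties, a null event, are broken by taking the smallest index).\<close>
definition target :: "nat \<Rightarrow> (nat \<Rightarrow> nat \<Rightarrow> real \<Rightarrow> real) \<Rightarrow> (nat \<Rightarrow> real)
    \<Rightarrow> nat \<Rightarrow> real \<Rightarrow> (nat \<Rightarrow> real) \<Rightarrow> nat" where
  "target n a v x y e = (LEAST j. j \<le> n \<and> clock (a x j) y (v x) (e j) = hold n a v x y e)"

text \<open>Embedded jump chain: k-th entry is (T_k, X(T_k), L(T_k)).  E k j = E^j_k.
  Once a holding time is infinite, the chain stays put with T = infinity.\<close>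
fun jchain :: "nat \<Rightarrow> (nat \<Rightarrow> nat \<Rightarrow> real \<Rightarrow> real) \<Rightarrow> (nat \<Rightarrow> real) \<Rightarrow> nat \<Rightarrow> real
    \<Rightarrow> (nat \<Rightarrow> nat \<Rightarrow> real) \<Rightarrow> nat \<Rightarrow> ereal \<times> nat \<times> real" where
  "jchain n a v x0 y0 E 0 = (0, x0, y0)"
| "jchain n a v x0 y0 E (Suc k) =
     (case jchain n a v x0 y0 E k of (T, x, y) \<Rightarrow>
        (let \<tau> = hold n a v x y (E k) in
         if T = \<infinity> \<or> \<tau> = \<infinity> then (\<infinity>, x, y)
         else (T + \<tau>, target n a v x y (E k), y + v x * real_of_ereal \<tau>)))"

text \<open>Continuous-time path (X(t), L(t)) for t >= 0: on [T_k, T_{k+1}) the position is X(T_k)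
  and the memory is L(T_k) + v_{X(T_k)} (t - T_k).\<close>
definition path :: "nat \<Rightarrow> (nat \<Rightarrow> nat \<Rightarrow> real \<Rightarrow> real) \<Rightarrow> (nat \<Rightarrow> real) \<Rightarrow> nat \<Rightarrow> real
    \<Rightarrow> (nat \<Rightarrow> nat \<Rightarrow> real) \<Rightarrow> real \<Rightarrow> nat \<times> real" where
  "path n a v x0 y0 E t =
     (let k = (LEAST k. ereal t < fst (jchain n a v x0 y0 E (Suc k)));
          (T, x, y) = jchain n a v x0 y0 E k
      in (x, y + v x * (t - real_of_ereal T)))"

definition revT :: "nat \<Rightarrow> (nat \<Rightarrow> nat \<Rightarrow> real \<Rightarrow> real) \<Rightarrow> (nat \<Rightarrow> real) \<Rightarrow> nat \<Rightarrow> real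
    \<Rightarrow> (nat \<Rightarrow> nat \<Rightarrow> real) \<Rightarrow> real" where
  "revT n a v x0 y0 E = Inf {t. 0 \<le> t \<and> 0 \<le> snd (path n a v x0 y0 E t)}"

definition exitT :: "nat \<Rightarrow> (nat \<Rightarrow> nat \<Rightarrow> real \<Rightarrow> real) \<Rightarrow> (nat \<Rightarrow> real) \<Rightarrow> nat \<Rightarrow> real
    \<Rightarrow> nat set \<Rightarrow> (nat \<Rightarrow> nat \<Rightarrow> real) \<Rightarrow> real" where
  "exitT n a v x0 y0 B E =
     Inf {t. revT n a v x0 y0 E \<le> t \<and> fst (path n a v x0 y0 E t) \<notin> B}"

definition cc :: "nat \<Rightarrow> nat \<Rightarrow> nat \<Rightarrow> (nat \<Rightarrow> real) \<Rightarrow> nat \<Rightarrow> real" where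
  "cc n N0 N1 v i =
     (if i \<le> N0 then (\<Sum>m\<le>i. v m)
      else if i \<le> n - N1 - 1 then real n
      else (\<Sum>m\<le>n - 1 - i. \<bar>v (n - m)\<bar>))"

definition nl_rate :: "nat \<Rightarrow> nat \<Rightarrow> nat \<Rightarrow> (nat \<Rightarrow> real) \<Rightarrow> nat \<Rightarrow> nat \<Rightarrow> real \<Rightarrow> real" where
  "nl_rate n N0 N1 v i j l =
     (if j = Suc i \<and> i < n then cc n N0 N1 v i * max l 0
      else if i = Suc j \<and> j < n then cc n N0 N1 v j * max (- l) 0
      else 0)"

definition lam :: "nat \<Rightarrow> nat \<Rightarrow> nat \<Rightarrow> (nat \<Rightarrow> real) \<Rightarrow> nat \<Rightarrow> real" where
  "lam n N0 N1 v i = v i / cc n N0 N1 v i"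

end

theory Submission
  imports Defs
begin


lemma sqmax_deriv: "((\<lambda>u::real. (max u 0)^2) has_real_derivative 2 * max u 0) (at u)"
proof (cases "u = 0")
  case True
  have "((\<lambda>h::real. ((max (u+h) 0)^2 - (max u 0)^2) / h) \<longlongrightarrow> 2 * max u 0) (at 0)"
  proof -
    have e: "((max (u+h) 0)^2 - (max u 0)^2) / h = max h 0" for h
      using True by (cases "h > 0") (auto simp: power2_eq_square)
    show ?thesis unfolding e using True
      by (auto intro!: tendsto_eq_intros)
  qed
  then show ?thesis by (simp add: DERIV_def)
next
  case False
  show ?thesis
  proof (cases "u > 0")
    case True
    have d: "((\<lambda>u::real. u^2) has_real_derivative 2 * u) (at u)"
      by (auto intro!: derivative_eq_intros)
    have "((\<lambda>u::real. (max u 0)^2) has_real_derivative 2 * u) (at u)"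
      by (rule has_field_derivative_transform_within_open[OF d, of "{0<..}"]) (use True in auto)
    then show ?thesis using True by simp
  next
    case f2: False
    with False have n: "u < 0" by auto
    have d: "((\<lambda>u::real. 0) has_real_derivative 0) (at u)" by simp
    have "((\<lambda>u::real. (max u 0)^2) has_real_derivative 0) (at u)"
      by (rule has_field_derivative_transform_within_open[OF d, of "{..<0}"]) (use n in auto)
    then show ?thesis using n by simp
  qed
qed


definition Fcl :: "real \<Rightarrow> real \<Rightarrow> real \<Rightarrow> real \<Rightarrow> real" where
  "Fcl \<beta> y w t = (if w = 0 \<or> \<beta> = 0 then t * max (\<beta>*y) 0
     else ((max (\<beta>*(y+w*t)) 0)^2 - (max (\<beta>*y) 0)^2) / (2*\<beta>*w))"

lemma F_has_integral:
  assumes "0 \<le> t"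
  shows "((\<lambda>r. max (\<beta>*(y+w*r)) 0) has_integral Fcl \<beta> y w t) {0..t}"
proof (cases "w = 0 \<or> \<beta> = 0")
  case True
  then have e: "(\<lambda>r. max (\<beta>*(y+w*r)) 0) = (\<lambda>r. max (\<beta>*y) 0)" by auto
  show ?thesis using True assms unfolding e Fcl_def
    using has_integral_const_real[of "max (\<beta>*y) 0" 0 t] by (auto simp: mult.commute)
next
  case False
  define H where "H z = (max (\<beta>*(y+w*z)) 0)^2 / (2*\<beta>*w)" for z
  have d: "(H has_vector_derivative max (\<beta>*(y+w*z)) 0) (at z within {0..t})" for z
  proof -
    have "((\<lambda>z. (max (\<beta>*(y+w*z)) 0)^2) has_real_derivative 2 * max (\<beta>*(y+w*z)) 0 * (\<beta>*w)) (at z)"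
    proof -
      have i: "((\<lambda>z. \<beta>*(y+w*z)) has_real_derivative \<beta>*w) (at z)"
        by (auto intro!: derivative_eq_intros)
      show ?thesis using DERIV_chain2[OF sqmax_deriv i] by (simp add: mult.commute)
    qed
    then have "(H has_real_derivative (2 * max (\<beta>*(y+w*z)) 0 * (\<beta>*w)) / (2*\<beta>*w)) (at z)"
      unfolding H_def by (intro DERIV_cdivide) 
    moreover have "(2 * max (\<beta>*(y+w*z)) 0 * (\<beta>*w)) / (2*\<beta>*w) = max (\<beta>*(y+w*z)) 0"
      using False by (simp add: field_simps)
    ultimately show ?thesis
      by (metis has_real_derivative_iff_has_vector_derivative has_vector_derivative_at_within)
  qed
  have "((\<lambda>r. max (\<beta>*(y+w*r)) 0) has_integral H t - H 0) {0..t}"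
    by (rule fundamental_theorem_of_calculus[OF assms]) (use d in auto)
  moreover have "H t - H 0 = Fcl \<beta> y w t" using False
    unfolding H_def Fcl_def by (simp add: diff_divide_distrib)
  ultimately show ?thesis by simp
qed

lemma F_integral: "0 \<le> t \<Longrightarrow> integral {0..t} (\<lambda>r. max (\<beta>*(y+w*r)) 0) = Fcl \<beta> y w t"
  using F_has_integral integral_unique by blast

lemma Fcl_cont: "continuous_on UNIV (Fcl \<beta> y w)"
  unfolding Fcl_def by (cases "w = 0 \<or> \<beta> = 0") (auto intro!: continuous_intros)

lemma Fcl_mono: "0 \<le> s \<Longrightarrow> s \<le> t \<Longrightarrow> Fcl \<beta> y w s \<le> Fcl \<beta> y w t"
proof -
  assume a: "0 \<le> s" "s \<le> t"
  have "Fcl \<beta> y w s = integral {0..s} (\<lambda>r. max (\<beta>*(y+w*r)) 0)" using a F_integral by simp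
  also have "\<dots> \<le> integral {0..t} (\<lambda>r. max (\<beta>*(y+w*r)) 0)"
    using a by (intro integral_subset_le) (auto intro!: integrable_continuous_interval continuous_intros)
  also have "\<dots> = Fcl \<beta> y w t" using a F_integral by simp
  finally show ?thesis .
qed

lemma Fcl_0: "Fcl \<beta> y w 0 = 0" unfolding Fcl_def by simp


definition Sset :: "real \<Rightarrow> real \<Rightarrow> real \<Rightarrow> real \<Rightarrow> real set" where
  "Sset \<beta> y w e = {t. 0 < t \<and> e \<le> Fcl \<beta> y w t}"

lemma clock_eq: "clock (\<lambda>l. max (\<beta>*l) 0) y w e =
   (if Sset \<beta> y w e = {} then \<infinity> else ereal (Inf (Sset \<beta> y w e)))"
proof -
  have "{t::real. 0 < t \<and> e \<le> integral {0..t} (\<lambda>s. max (\<beta>*(y + w * s)) 0)} = Sset \<beta> y w e"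
    unfolding Sset_def using F_integral by auto
  then show ?thesis unfolding clock_def by simp
qed

lemma clock_at:
  assumes "0 < t0" "e \<le> Fcl \<beta> y w t0" "\<And>t. 0 < t \<Longrightarrow> t < t0 \<Longrightarrow> Fcl \<beta> y w t < e"
  shows "clock (\<lambda>l. max (\<beta>*l) 0) y w e = ereal t0"
proof -
  have m: "t0 \<in> Sset \<beta> y w e" using assms unfolding Sset_def by auto
  have "Inf (Sset \<beta> y w e) = t0"
    by (rule cInf_eq_minimum[OF m]) (use assms in \<open>force simp: Sset_def\<close>)
  then show ?thesis using m clock_eq by auto
qed

lemma clock_never:
  assumes "\<And>t. 0 < t \<Longrightarrow> Fcl \<beta> y w t < e"
  shows "clock (\<lambda>l. max (\<beta>*l) 0) y w e = \<infinity>"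
proof -
  have "Sset \<beta> y w e = {}" using assms unfolding Sset_def by force
  then show ?thesis using clock_eq by auto
qed

lemma clock_nonneg: "0 \<le> clock (\<lambda>l. max (\<beta>*l) 0) y w e"
proof -
  have "0 \<le> Inf (Sset \<beta> y w e)" if "Sset \<beta> y w e \<noteq> {}"
    by (rule cInf_greatest[OF that]) (auto simp: Sset_def)
  then show ?thesis using clock_eq[of \<beta> y w e] by auto
qed

lemma clock_pos:
  assumes "0 < e"
  shows "0 < clock (\<lambda>l. max (\<beta>*l) 0) y w e"
proof -
  have "isCont (Fcl \<beta> y w) 0" using Fcl_cont continuous_on_eq_continuous_at by blast
  then have "\<forall>\<^sub>F t in at 0. dist (Fcl \<beta> y w t) (Fcl \<beta> y w 0) < e"
    using assms by (auto simp: isCont_def tendsto_iff)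
  then obtain d where d: "d > 0" "\<And>t. t \<noteq> 0 \<Longrightarrow> dist t 0 < d \<Longrightarrow> dist (Fcl \<beta> y w t) (Fcl \<beta> y w 0) < e"
    by (auto simp: eventually_at)
  have small: "Fcl \<beta> y w t < e" if "0 < t" "t < d" for t
    using d(2)[of t] that by (auto simp: Fcl_0 dist_real_def)
  have "d \<le> Inf (Sset \<beta> y w e)" if "Sset \<beta> y w e \<noteq> {}"
    by (rule cInf_greatest[OF that]) (use small in \<open>force simp: Sset_def not_less[symmetric]\<close>)
  then show ?thesis using clock_eq[of \<beta> y w e] d
    by (cases "Sset \<beta> y w e = {}") auto
qed

lemma mmax: "0 < (c::real) \<Longrightarrow> max (c*x) 0 = c * max x 0"
  by (cases "x \<le> 0") (auto simp: max_def mult_le_0_iff)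

lemma Fcl_up: "0 < w \<Longrightarrow> 0 < c \<Longrightarrow>
   Fcl c y w t = c * ((max (y+w*t) 0)^2 - (max y 0)^2) / (2*w)"
proof -
  assume a: "0 < w" "0 < c"
  have "max (c*(y+w*t)) 0 = c * max (y+w*t) 0" "max (c*y) 0 = c * max y 0"
    using mmax[OF a(2)] by simp_all
  then show ?thesis using a unfolding Fcl_def by (simp add: power2_eq_square field_simps)
qed

lemma Fcl_down: "0 < w \<Longrightarrow> 0 < c \<Longrightarrow>
   Fcl (-c) y w t = c * ((max (-y) 0)^2 - (max (-(y+w*t)) 0)^2) / (2*w)"
proof -
  assume a: "0 < w" "0 < c"
  have e1: "-c*(y+w*t) = c*(-(y+w*t))" "-c*y = c*(-y)" by (simp_all add: algebra_simps)
  have "max (-c*(y+w*t)) 0 = c * max (-(y+w*t)) 0" "max (-c*y) 0 = c * max (-y) 0"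
    by (simp_all only: e1 mmax[OF a(2)])
  then show ?thesis using a unfolding Fcl_def by (simp add: power2_eq_square field_simps)
qed

lemma clock_up:
  assumes w: "0 < w" and c: "0 < c" and e: "0 < e"
  shows "clock (\<lambda>l. max (c*l) 0) y w e = ereal ((sqrt ((max y 0)^2 + 2*w*e/c) - y) / w)"
proof (rule clock_at)
  define m where "m = max y 0"
  define R where "R = sqrt (m^2 + 2*w*e/c)"
  have pos: "0 < 2*w*e/c" using w c e by simp
  have m0: "0 \<le> m" unfolding m_def by simp
  have arg: "0 \<le> m^2 + 2*w*e/c" by (intro add_nonneg_nonneg) (use pos in auto)
  have R2: "R^2 = m^2 + 2*w*e/c" unfolding R_def by (rule real_sqrt_pow2[OF arg])
  have R0: "0 \<le> R" unfolding R_def using arg by simp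
  have Rm: "m < R"
  proof (rule ccontr)
    assume "\<not> m < R" then have "R \<le> m" by simp
    then have "R^2 \<le> m^2" using R0 by (simp add: power_mono)
    then show False using R2 pos by simp
  qed
  have ym: "y \<le> m" unfolding m_def by simp
  show "0 < (sqrt ((max y 0)^2 + 2*w*e/c) - y) / w"
    using Rm ym w unfolding R_def m_def by simp
  have yt: "y + w * ((R - y)/w) = R" using w by simp
  show "e \<le> Fcl c y w ((sqrt ((max y 0)^2 + 2*w*e/c) - y) / w)"
    unfolding Fcl_up[OF w c] R_def[symmetric] m_def[symmetric] yt
    using R0 R2 c w by (simp add: max_absorb1 field_simps)
  fix t assume t: "0 < t" "t < (sqrt ((max y 0)^2 + 2*w*e/c) - y) / w"
  then have "y + w*t < R" using w unfolding R_def[symmetric] m_def[symmetric] by (simp add: field_simps)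
  then have "max (y+w*t) 0 < R" using Rm m0 by simp
  then have "(max (y+w*t) 0)^2 < R^2" by (intro power_strict_mono) auto
  then have "c * ((max (y+w*t) 0)^2 - m^2) < c * (R^2 - m^2)" using c by simp
  then have "c * ((max (y+w*t) 0)^2 - m^2) / (2*w) < c * (R^2 - m^2) / (2*w)" using w
    by (simp add: divide_strict_right_mono)
  also have "\<dots> = e" using R2 c w by (simp add: field_simps)
  finally show "Fcl c y w t < e" unfolding Fcl_up[OF w c] m_def .
qed

lemma clock_down_fin:
  assumes w: "0 < w" and c: "0 < c" and e: "0 < e" and y: "y < 0" and ec: "e \<le> c*y^2/(2*w)"
  shows "clock (\<lambda>l. max ((-c)*l) 0) y w e = ereal ((- sqrt (y^2 - 2*w*e/c) - y) / w)"
proof (rule clock_at)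
  define Q where "Q = sqrt (y^2 - 2*w*e/c)"
  have pos: "0 < 2*w*e/c" using w c e by simp
  have "2*w*e \<le> c*y^2" using ec w by (simp add: field_simps)
  then have "2*w*e/c \<le> y^2" using c by (simp add: pos_divide_le_eq[OF c] mult.commute)
  then have nn: "0 \<le> y^2 - 2*w*e/c" by simp
  have Q2: "Q^2 = y^2 - 2*w*e/c" unfolding Q_def by (rule real_sqrt_pow2[OF nn])
  have Q0: "0 \<le> Q" unfolding Q_def using nn by simp
  have Qy: "Q < -y"
  proof (rule ccontr)
    assume "\<not> Q < -y" then have "-y \<le> Q" by simp
    then have "(-y)^2 \<le> Q^2" using y by (intro power_mono) auto
    then show False using Q2 pos by simp
  qed
  show "0 < (- sqrt (y^2 - 2*w*e/c) - y) / w" using Qy w unfolding Q_def by simp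
  have yt: "y + w * ((- Q - y)/w) = - Q" using w by simp
  have my: "max (-y) 0 = -y" using y by simp
  show "e \<le> Fcl (-c) y w ((- sqrt (y^2 - 2*w*e/c) - y) / w)"
    unfolding Fcl_down[OF w c] Q_def[symmetric] yt my
    using Q0 Q2 c w by (simp add: max_absorb1 field_simps)
  fix t assume t: "0 < t" "t < (- sqrt (y^2 - 2*w*e/c) - y) / w"
  then have "y + w*t < - Q" using w unfolding Q_def[symmetric] by (simp add: field_simps)
  then have "Q < max (-(y+w*t)) 0" using Q0 by simp
  then have "Q^2 < (max (-(y+w*t)) 0)^2" using Q0 by (intro power_strict_mono) auto
  then have "c * (y^2 - (max (-(y+w*t)) 0)^2) < c * (y^2 - Q^2)" using c by simp
  then have "c * (y^2 - (max (-(y+w*t)) 0)^2) / (2*w) < c * (y^2 - Q^2) / (2*w)" using w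
    by (simp add: divide_strict_right_mono)
  also have "\<dots> = e" using Q2 c w by (simp add: field_simps)
  finally show "Fcl (-c) y w t < e" unfolding Fcl_down[OF w c] my by (simp add: power2_eq_square)
qed

lemma clock_down_inf:
  assumes w: "0 < w" and c: "0 < c" and e: "0 < e" and n: "\<not> (y < 0 \<and> e \<le> c*y^2/(2*w))"
  shows "clock (\<lambda>l. max ((-c)*l) 0) y w e = \<infinity>"
proof (rule clock_never)
  fix t :: real assume t: "0 < t"
  have "Fcl (-c) y w t \<le> c * (max (-y) 0)^2 / (2*w)"
    unfolding Fcl_down[OF w c] using c w
    by (intro divide_right_mono mult_left_mono) auto
  also have "\<dots> < e"
  proof (cases "y < 0")
    case True
    then show ?thesis using n by (simp add: max_def power2_eq_square)
  next
    case False then show ?thesis using e by simp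
  qed
  finally show "Fcl (-c) y w t < e" .
qed

lemma clock_zero: "0 < e \<Longrightarrow> clock (\<lambda>l. max (0*l) 0) y w e = \<infinity>"
  by (rule clock_never) (simp add: Fcl_def)


lemma max_cmult: "0 \<le> (c::real) \<Longrightarrow> c * max l 0 = max (c*l) 0"
  by (cases "l \<le> 0") (auto simp: max_def mult_le_0_iff)

locale model =
  fixes n N0 N1 :: nat and vv :: "nat \<Rightarrow> real" and l :: real
  assumes N0n: "N0 < n" and vpos: "\<And>j. j \<le> N0 \<Longrightarrow> 0 < vv j" and lneg: "l < 0"
begin

abbreviation "c \<equiv> cc n N0 N1 vv"
abbreviation "a \<equiv> nl_rate n N0 N1 vv"
abbreviation "ch e \<equiv> jchain n a vv N0 l e"

definition bet :: "nat \<Rightarrow> nat \<Rightarrow> real" where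
  "bet i j = (if j = Suc i \<and> i < n then c i else if i = Suc j \<and> j < n then - c j else 0)"

lemma cc_pos: "i \<le> N0 \<Longrightarrow> 0 < c i"
proof -
  assume i: "i \<le> N0"
  have "0 < (\<Sum>m\<le>i. vv m)"
    by (rule sum_pos) (use i vpos in auto)
  then show ?thesis using i unfolding cc_def by simp
qed

lemma cc_nonneg: "0 \<le> c i"
  unfolding cc_def by (auto intro!: sum_nonneg less_imp_le[OF sum_pos] simp: less_imp_le vpos)

lemma a_eq: "a i j = (\<lambda>l. max (bet i j * l) 0)"
proof
  fix l show "a i j l = max (bet i j * l) 0" unfolding nl_rate_def bet_def
    using max_cmult[OF cc_nonneg[of i], of l] max_cmult[OF cc_nonneg[of j], of "-l"] by auto
qed

lemma clock_a: "clock (a i j) y w ee = clock (\<lambda>l. max (bet i j * l) 0) y w ee"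
  by (simp add: a_eq)

lemma hold_target:
  assumes j0: "j0 \<le> n" and c0: "clock (a x j0) y (vv x) (ee j0) = ereal \<tau>"
    and others: "\<And>j. j \<le> n \<Longrightarrow> j \<noteq> j0 \<Longrightarrow> ereal \<tau> < clock (a x j) y (vv x) (ee j)"
  shows "hold n a vv x y ee = ereal \<tau>" "target n a vv x y ee = j0"
proof -
  have le: "ereal \<tau> \<le> clock (a x j) y (vv x) (ee j)" if "j \<le> n" for j
    using others[of j] c0 that by (cases "j = j0") auto
  show h: "hold n a vv x y ee = ereal \<tau>" unfolding hold_def
  proof (rule Min_eqI)
    show "ereal \<tau> \<in> (\<lambda>j. clock (a x j) y (vv x) (ee j)) ` {0..n}"
      using j0 c0 by (intro image_eqI[of _ _ j0]) auto
  qed (use le in auto)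
  show "target n a vv x y ee = j0" unfolding target_def h
  proof (rule Least_equality)
    fix j assume "j \<le> n \<and> clock (a x j) y (vv x) (ee j) = ereal \<tau>"
    then show "j0 \<le> j" using others[of j] by (cases "j = j0") auto
  qed (use j0 c0 in auto)
qed

lemma ch_step:
  assumes "ch e k = (ereal T, x, y)" "hold n a vv x y (e k) = ereal \<tau>"
  shows "ch e (Suc k) = (ereal (T + \<tau>), target n a vv x y (e k), y + vv x * \<tau>)"
  using assms by simp

lemma hold_nonneg: "0 \<le> hold n a vv x y ee"
  unfolding hold_def by (subst Min_ge_iff) (auto simp: clock_a clock_nonneg)

lemma hold_pos: "(\<And>j. 0 < ee j) \<Longrightarrow> 0 < hold n a vv x y ee"
  unfolding hold_def by (subst Min_gr_iff) (auto simp: clock_a clock_pos)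

lemma T_mono: "fst (ch e k) \<le> fst (ch e (Suc k))"
proof -
  obtain T x y where ch: "ch e k = (T, x, y)" by (metis prod.exhaust)
  show ?thesis using ch hold_nonneg[of x y "e k"]
    by (auto simp: Let_def add_increasing2)
qed

lemma T_mono': "k \<le> k' \<Longrightarrow> fst (ch e k) \<le> fst (ch e k')"
proof (induction k' rule: dec_induct)
  case base then show ?case by (rule order_refl)
next
  case (step m) then show ?case using T_mono[of e m] order_trans by blast
qed

lemma T_strict:
  assumes "\<And>j. 0 < e k j" "ch e k = (ereal T, x, y)"
  shows "ereal T < fst (ch e (Suc k))"
proof -
  have h: "0 < hold n a vv x y (e k)" using hold_pos assms(1) by blast
  show ?thesis
  proof (cases "hold n a vv x y (e k) = \<infinity>")
    case True then show ?thesis using assms by (simp add: Let_def)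
  next
    case False
    then obtain \<tau> where "hold n a vv x y (e k) = ereal \<tau>" using h by (cases "hold n a vv x y (e k)") auto
    then show ?thesis using assms h by (simp add: Let_def)
  qed
qed

end


lemma clock_zero': "b = 0 \<Longrightarrow> 0 < e \<Longrightarrow> clock (\<lambda>l. max (b*l) 0) y w e = \<infinity>"
  using clock_zero by simp

context model begin

lemma bet_down: "0 < x \<Longrightarrow> x \<le> n \<Longrightarrow> bet x (x-1) = - c (x-1)"
  unfolding bet_def by auto

lemma bet_up: "x < n \<Longrightarrow> bet x (Suc x) = c x"
  unfolding bet_def by auto

lemma bet_other: "j \<noteq> Suc x \<Longrightarrow> j \<noteq> x - 1 \<or> x = 0 \<Longrightarrow> bet x j = 0"
  unfolding bet_def by auto

lemma down_step:
  assumes ep: "\<And>j. 0 < e k j" and x: "0 < x" "x \<le> N0" and y: "y < 0"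
    and ec: "e k (x-1) \<le> c (x-1) * y^2 / (2 * vv x)"
    and chk: "ch e k = (ereal T, x, y)"
  shows "ch e (Suc k) = (ereal (T + (- sqrt (y^2 - 2* vv x*e k (x-1)/c (x-1)) - y)/vv x), x - 1,
            - sqrt (y^2 - 2* vv x*e k (x-1)/c (x-1)))"
proof -
  define w where "w = vv x"
  define Q where "Q = sqrt (y^2 - 2* vv x*e k (x-1)/c (x-1))"
  define \<tau> where "\<tau> = (- Q - y)/w"
  define R where "R = sqrt ((max y 0)^2 + 2* w*e k (Suc x)/c x)"
  have w: "0 < w" unfolding w_def using x vpos by auto
  have cd: "0 < c (x-1)" using x cc_pos by auto
  have cu: "0 < c x" using x cc_pos by auto
  have xn: "x < n" using x N0n by auto
  have c1: "clock (a x (x-1)) y (vv x) (e k (x-1)) = ereal \<tau>"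
    unfolding clock_a bet_down[OF x(1) less_imp_le[OF xn]] \<tau>_def Q_def w_def
    by (rule clock_down_fin) (use w cd ep y ec in \<open>auto simp: w_def\<close>)
  have R0: "0 < R" unfolding R_def using ep w cu
    by (intro real_sqrt_gt_zero add_nonneg_pos) auto
  have Q0: "0 \<le> Q"
  proof -
    have "2* vv x*e k (x-1) \<le> c (x-1) * y^2" using ec w by (simp add: field_simps w_def)
    then have "2* vv x*e k (x-1)/c (x-1) \<le> y^2" using cd by (simp add: pos_divide_le_eq mult.commute)
    then show ?thesis unfolding Q_def by simp
  qed
  have lt: "\<tau> < (R - y)/w" unfolding \<tau>_def using R0 Q0 w by (simp add: divide_strict_right_mono)
  have others: "ereal \<tau> < clock (a x j) y (vv x) (e k j)" if "j \<le> n" "j \<noteq> x - 1" for j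
  proof (cases "j = Suc x")
    case True
    have "clock (a x j) y (vv x) (e k j) = ereal ((R - y)/w)"
      unfolding True clock_a bet_up[OF xn] R_def w_def
      by (rule clock_up) (use w cu ep in \<open>auto simp: w_def\<close>)
    then show ?thesis using lt by simp
  next
    case False
    then have "bet x j = 0" using that by (intro bet_other) auto
    then show ?thesis unfolding clock_a using clock_zero'[of "bet x j"] ep by simp
  qed
  have ht: "hold n a vv x y (e k) = ereal \<tau>" "target n a vv x y (e k) = x - 1"
    using hold_target[OF _ c1 others] xn by auto
  have "y + vv x * \<tau> = - Q" unfolding \<tau>_def w_def using w by (simp add: w_def)
  then show ?thesis using ch_step[OF chk ht(1)] ht(2) unfolding \<tau>_def Q_def w_def by simp
qed

lemma up_step:
  assumes ep: "\<And>j. 0 < e k j" and x: "x \<le> N0"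
    and nd: "x = 0 \<or> \<not> (y < 0 \<and> e k (x-1) \<le> c (x-1) * y^2 / (2 * vv x))"
    and chk: "ch e k = (ereal T, x, y)"
  shows "ch e (Suc k) = (ereal (T + (sqrt ((max y 0)^2 + 2* vv x*e k (Suc x)/c x) - y)/vv x), Suc x,
            sqrt ((max y 0)^2 + 2* vv x*e k (Suc x)/c x))"
proof -
  define w where "w = vv x"
  define R where "R = sqrt ((max y 0)^2 + 2* w*e k (Suc x)/c x)"
  define \<tau> where "\<tau> = (R - y)/w"
  have w: "0 < w" unfolding w_def using x vpos by auto
  have cu: "0 < c x" using x cc_pos by auto
  have xn: "x < n" using x N0n by auto
  have c1: "clock (a x (Suc x)) y (vv x) (e k (Suc x)) = ereal \<tau>"
    unfolding clock_a bet_up[OF xn] \<tau>_def R_def w_def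
    by (rule clock_up) (use w cu ep in \<open>auto simp: w_def\<close>)
  have others: "ereal \<tau> < clock (a x j) y (vv x) (e k j)" if "j \<le> n" "j \<noteq> Suc x" for j
  proof (cases "0 < x \<and> j = x - 1")
    case True
    have cd: "0 < c (x-1)" using x cc_pos by auto
    have "clock (a x j) y (vv x) (e k j) = \<infinity>"
      unfolding clock_a True[THEN conjunct2] bet_down[OF True[THEN conjunct1] less_imp_le[OF xn]]
      by (rule clock_down_inf) (use w cd ep nd True in \<open>auto simp: w_def\<close>)
    then show ?thesis by simp
  next
    case False
    then have "bet x j = 0" using that by (intro bet_other) auto
    then show ?thesis unfolding clock_a using clock_zero'[of "bet x j"] ep by simp
  qed
  have ht: "hold n a vv x y (e k) = ereal \<tau>" "target n a vv x y (e k) = Suc x"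
    using hold_target[OF _ c1 others] xn by auto
  have "y + vv x * \<tau> = R" unfolding \<tau>_def w_def using w by (simp add: w_def)
  then show ?thesis using ch_step[OF chk ht(1)] ht(2) unfolding \<tau>_def R_def w_def by simp
qed

end


context model begin

primrec yd :: "(nat \<Rightarrow> nat \<Rightarrow> real) \<Rightarrow> nat \<Rightarrow> real" where
  "yd e 0 = l"
| "yd e (Suc k) = - sqrt ((yd e k)^2 - 2 * vv (N0-k) * e k (N0-k-1) / c (N0-k-1))"

definition down :: "(nat \<Rightarrow> nat \<Rightarrow> real) \<Rightarrow> nat \<Rightarrow> bool" where
  "down e k \<longleftrightarrow> k < N0 \<and> yd e k < 0 \<and> e k (N0-k-1) \<le> c (N0-k-1) * (yd e k)^2 / (2 * vv (N0-k))"

definition Dn :: "(nat \<Rightarrow> nat \<Rightarrow> real) \<Rightarrow> nat" where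
  "Dn e = (LEAST k. \<not> down e k)"

lemma not_down_N0: "\<not> down e N0" unfolding down_def by simp

lemma Dn_le: "Dn e \<le> N0" unfolding Dn_def by (rule Least_le) (rule not_down_N0)

lemma down_lt: "k < Dn e \<Longrightarrow> down e k" unfolding Dn_def using not_less_Least by blast

lemma not_down_Dn: "\<not> down e (Dn e)" unfolding Dn_def by (rule LeastI[of _ N0]) (rule not_down_N0)

lemma yd_nonpos: "k \<le> Dn e \<Longrightarrow> yd e k \<le> 0"
proof (cases k)
  case 0 then show ?thesis using lneg by simp
next
  case (Suc k')
  assume "k \<le> Dn e"
  then have "down e k'" using Suc down_lt by simp
  then have kN: "k' < N0" and ec: "e k' (N0-k'-1) \<le> c (N0-k'-1) * (yd e k')^2 / (2 * vv (N0-k'))"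
    unfolding down_def by auto
  have w: "0 < vv (N0-k')" using vpos by simp
  have cd: "0 < c (N0-k'-1)" using cc_pos by simp
  have "2 * vv (N0-k') * e k' (N0-k'-1) \<le> c (N0-k'-1) * (yd e k')^2" using ec w by (simp add: field_simps)
  then have "2 * vv (N0-k') * e k' (N0-k'-1) / c (N0-k'-1) \<le> (yd e k')^2"
    using cd by (simp add: pos_divide_le_eq mult.commute)
  then show ?thesis using Suc by simp
qed

lemma chain_down:
  assumes ep: "\<And>k j. 0 < e k j"
  shows "k \<le> Dn e \<Longrightarrow> \<exists>T. ch e k = (ereal T, N0 - k, yd e k)"
proof (induction k)
  case 0 then show ?case by simp
next
  case (Suc k)
  then obtain T where chk: "ch e k = (ereal T, N0 - k, yd e k)" by auto
  have d: "down e k" using Suc.prems down_lt by simp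
  then have kN: "k < N0" and y: "yd e k < 0"
    and ec: "e k (N0-k-1) \<le> c (N0-k-1) * (yd e k)^2 / (2 * vv (N0-k))" unfolding down_def by auto
  have "ch e (Suc k) = (ereal (T + (- sqrt ((yd e k)^2 - 2 * vv (N0-k) * e k (N0-k-1)/c (N0-k-1)) - yd e k)/vv (N0-k)), N0 - k - 1,
            - sqrt ((yd e k)^2 - 2 * vv (N0-k) * e k (N0-k-1)/c (N0-k-1)))"
    by (rule down_step[OF ep _ _ y _ chk]) (use kN ec in auto)
  then show ?case by simp
qed

definition g :: "(nat \<Rightarrow> nat \<Rightarrow> real) \<Rightarrow> nat" where "g e = N0 - Dn e"

definition ysum :: "(nat \<Rightarrow> nat \<Rightarrow> real) \<Rightarrow> nat \<Rightarrow> real" where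
  "ysum e i = 2 * (\<Sum>m\<le>i. lam n N0 N1 vv (g e + m) * e (Dn e + m) (g e + m + 1))"

definition yu :: "(nat \<Rightarrow> nat \<Rightarrow> real) \<Rightarrow> nat \<Rightarrow> real" where "yu e i = sqrt (ysum e i)"

lemma lam_pos: "j \<le> N0 \<Longrightarrow> 0 < lam n N0 N1 vv j"
  unfolding lam_def using vpos cc_pos by simp

lemma ysum_pos:
  assumes ep: "\<And>k j. 0 < e k j" and i: "i \<le> Dn e"
  shows "0 < ysum e i"
proof -
  have "0 < (\<Sum>m\<le>i. lam n N0 N1 vv (g e + m) * e (Dn e + m) (g e + m + 1))"
  proof (rule sum_pos)
    fix m assume "m \<in> {..i}"
    then have "g e + m \<le> N0" using i Dn_le unfolding g_def by auto
    then show "0 < lam n N0 N1 vv (g e + m) * e (Dn e + m) (g e + m + 1)"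
      using lam_pos ep by simp
  qed auto
  then show ?thesis unfolding ysum_def by simp
qed

lemma ysum_Suc: "ysum e (Suc i) = ysum e i + 2 * (lam n N0 N1 vv (g e + Suc i) * e (Dn e + Suc i) (g e + Suc i + 1))"
  unfolding ysum_def by (simp add: algebra_simps)

lemma chain_up:
  assumes ep: "\<And>k j. 0 < e k j"
  shows "i \<le> Dn e \<Longrightarrow> \<exists>T. ch e (Dn e + 1 + i) = (ereal T, g e + 1 + i, yu e i)"
proof (induction i)
  case 0
  obtain T where chk: "ch e (Dn e) = (ereal T, g e, yd e (Dn e))"
    using chain_down[of e "Dn e"] ep unfolding g_def by auto
  have nd: "g e = 0 \<or> \<not> (yd e (Dn e) < 0 \<and> e (Dn e) (g e - 1) \<le> c (g e - 1) * (yd e (Dn e))^2 / (2 * vv (g e)))"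
    using not_down_Dn[of e] Dn_le[of e] unfolding down_def g_def by auto
  have gN: "g e \<le> N0" unfolding g_def by simp
  have st: "ch e (Suc (Dn e)) = (ereal (T + (sqrt ((max (yd e (Dn e)) 0)^2 + 2 * vv (g e) * e (Dn e) (Suc (g e))/c (g e)) - yd e (Dn e))/vv (g e)), Suc (g e),
            sqrt ((max (yd e (Dn e)) 0)^2 + 2 * vv (g e) * e (Dn e) (Suc (g e))/c (g e)))"
    by (rule up_step[OF ep gN nd chk])
  have "(max (yd e (Dn e)) 0)^2 + 2 * vv (g e) * e (Dn e) (Suc (g e))/c (g e) = ysum e 0"
    using yd_nonpos[of "Dn e" e] unfolding ysum_def lam_def by (simp add: max_absorb2)
  then show ?case using st unfolding yu_def by simp
next
  case (Suc i)
  then obtain T where chk: "ch e (Dn e + 1 + i) = (ereal T, g e + 1 + i, yu e i)" by auto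
  have xN: "g e + 1 + i \<le> N0" using Suc.prems Dn_le[of e] unfolding g_def by auto
  have y0: "0 \<le> yu e i" unfolding yu_def using ysum_pos[of e i, OF ep] Suc.prems by simp
  have st: "ch e (Suc (Dn e + 1 + i)) = (ereal (T + (sqrt ((max (yu e i) 0)^2 + 2 * vv (g e + 1 + i) * e (Dn e + 1 + i) (Suc (g e + 1 + i))/c (g e + 1 + i)) - yu e i)/vv (g e + 1 + i)), Suc (g e + 1 + i),
            sqrt ((max (yu e i) 0)^2 + 2 * vv (g e + 1 + i) * e (Dn e + 1 + i) (Suc (g e + 1 + i))/c (g e + 1 + i)))"
    by (rule up_step[OF ep xN _ chk]) (use y0 in auto)
  have "(max (yu e i) 0)^2 + 2 * vv (g e + 1 + i) * e (Dn e + 1 + i) (Suc (g e + 1 + i))/c (g e + 1 + i) = ysum e (Suc i)"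
    using y0 ysum_pos[of e i, OF ep] Suc.prems unfolding ysum_Suc yu_def lam_def
    by (simp add: max_absorb1)
  then show ?case using st unfolding yu_def by simp
qed

end


declare jchain.simps(2)[simp del]

context model begin

lemma fin_step:
  assumes "ch e k = (ereal T, x, y)" "ch e (Suc k) = (ereal T', x', y')"
  shows "y' = y + vv x * (T' - T)"
proof -
  have h0: "0 \<le> hold n a vv x y (e k)" by (rule hold_nonneg)
  show ?thesis
  proof (cases "hold n a vv x y (e k)")
    case (real \<tau>)
    have "ch e (Suc k) = (ereal (T + \<tau>), target n a vv x y (e k), y + vv x * \<tau>)"
      by (rule ch_step[OF assms(1) real])
    then have "T' = T + \<tau>" "y' = y + vv x * \<tau>" using assms(2) by simp_all
    then show ?thesis by simp
  next
    case PInf then show ?thesis using assms by (simp add: Let_def jchain.simps(2))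
  next
    case MInf then show ?thesis using h0 by simp
  qed
qed

lemma path_piece:
  assumes chk: "ch e k = (ereal Tk, x, y)" and t: "Tk \<le> t" "ereal t < fst (ch e (Suc k))"
  shows "path n a vv N0 l e t = (x, y + vv x * (t - Tk))"
proof -
  have L: "(LEAST k. ereal t < fst (ch e (Suc k))) = k"
  proof (rule Least_equality)
    fix k' assume k': "ereal t < fst (ch e (Suc k'))"
    show "k \<le> k'"
    proof (rule ccontr)
      assume "\<not> k \<le> k'"
      then have "fst (ch e (Suc k')) \<le> fst (ch e k)" by (intro T_mono') auto
      then have "fst (ch e (Suc k')) \<le> ereal t" using t(1) chk order_trans by fastforce
      then show False using k' by simp
    qed
  qed (use t in auto)
  show ?thesis unfolding path_def Let_def L using chk by simp
qed

lemma locate: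
  assumes "0 \<le> t" 
  shows "ereal t < fst (ch e (Suc K)) \<Longrightarrow> \<exists>k\<le>K. fst (ch e k) \<le> ereal t \<and> ereal t < fst (ch e (Suc k))"
proof (induction K)
  case 0 then show ?case using assms by auto
next
  case (Suc K)
  show ?case
  proof (cases "ereal t < fst (ch e (Suc K))")
    case True then show ?thesis using Suc.IH by (meson le_Suc_eq)
  next
    case False then show ?thesis using Suc.prems by (intro exI[of _ "Suc K"]) auto
  qed
qed

lemma T_nonneg: "0 \<le> fst (ch e k)"
  using T_mono'[of 0 k e] by simp

theorem pathwise:
  assumes ep: "\<And>k j. 0 < e k j"
  shows "revT n a vv N0 l e = real_of_ereal (fst (ch e (Dn e))) - yd e (Dn e) / vv (g e)"
    and "fst (path n a vv N0 l e (revT n a vv N0 l e)) = g e"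
    and "snd (path n a vv N0 l e (exitT n a vv N0 l {..N0} e)) = yu e (Dn e)"
proof -
  define D where "D = Dn e"
  define gg where "gg = g e"
  have DN: "D \<le> N0" unfolding D_def by (rule Dn_le)
  have ggD: "gg = N0 - D" unfolding gg_def g_def D_def ..
  obtain TD where chD: "ch e D = (ereal TD, gg, yd e D)"
    using chain_down[of e D] ep unfolding D_def gg_def g_def by auto
  obtain T1 where ch1: "ch e (D + 1 + 0) = (ereal T1, gg + 1 + 0, yu e 0)"
    using chain_up[of e 0] ep unfolding D_def gg_def by auto
  obtain TX where chX: "ch e (D + 1 + D) = (ereal TX, gg + 1 + D, yu e D)"
    using chain_up[of e D] ep unfolding D_def gg_def by auto
  define w where "w = vv gg"
  have w: "0 < w" unfolding w_def using vpos ggD by simp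
  have yD: "yd e D \<le> 0" using yd_nonpos[of D e] unfolding D_def by simp
  have yu0: "0 < yu e 0" unfolding yu_def using ysum_pos[of e 0, OF ep] by simp
  have st1: "yu e 0 = yd e D + w * (T1 - TD)"
    using fin_step[OF chD] ch1 unfolding w_def by simp
  define R where "R = TD - yd e D / w"
  have TDR: "TD \<le> R" unfolding R_def using yD w by (simp add: divide_nonpos_pos)
  have RT1: "R < T1"
  proof -
    have "yd e D + w * (R - TD) = 0" unfolding R_def using w by simp
    then have "yd e D + w * (R - TD) < yd e D + w * (T1 - TD)" using st1 yu0 by simp
    then show ?thesis using w by simp
  qed
  have TD0: "0 \<le> TD" using T_nonneg[of e D] chD by simp
  have pathR: "path n a vv N0 l e R = (gg, 0)"
  proof -
    have "path n a vv N0 l e R = (gg, yd e D + vv gg * (R - TD))"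
      by (rule path_piece[OF chD TDR]) (use ch1 RT1 in simp)
    then show ?thesis unfolding R_def w_def[symmetric] using w by simp
  qed
  have revR: "revT n a vv N0 l e = R"
    unfolding revT_def
  proof (rule cInf_eq_minimum)
    show "R \<in> {t. 0 \<le> t \<and> 0 \<le> snd (path n a vv N0 l e t)}" using pathR TD0 TDR by simp
    fix t assume tA: "t \<in> {t. 0 \<le> t \<and> 0 \<le> snd (path n a vv N0 l e t)}"
    show "R \<le> t"
    proof (rule ccontr)
      assume "\<not> R \<le> t" then have tR: "t < R" by simp
      have t0: "0 \<le> t" using tA by simp
      have "ereal t < fst (ch e (Suc D))" using ch1 tR RT1 by simp
      then obtain k where k: "k \<le> D" "fst (ch e k) \<le> ereal t" "ereal t < fst (ch e (Suc k))"
        using locate[OF t0] by blast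
      obtain Tk where chk: "ch e k = (ereal Tk, N0 - k, yd e k)"
        using chain_down[of e k] ep k(1) unfolding D_def by auto
      have pt: "path n a vv N0 l e t = (N0 - k, yd e k + vv (N0 - k) * (t - Tk))"
        by (rule path_piece[OF chk]) (use k chk in auto)
      have "yd e k + vv (N0 - k) * (t - Tk) < 0"
      proof (cases "k < D")
        case True
        obtain Tk1 where chk1: "ch e (Suc k) = (ereal Tk1, N0 - Suc k, yd e (Suc k))"
          using chain_down[of e "Suc k"] ep True unfolding D_def by auto
        have "yd e (Suc k) = yd e k + vv (N0 - k) * (Tk1 - Tk)" using fin_step[OF chk chk1] .
        moreover have "yd e (Suc k) \<le> 0" using yd_nonpos[of "Suc k" e] True unfolding D_def by simp
        moreover have "t < Tk1" using k(3) chk1 by simp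
        moreover have "0 < vv (N0 - k)" using vpos by simp
        ultimately show ?thesis by (smt (verit) mult_strict_left_mono)
      next
        case False
        then have kD: "k = D" using k by simp
        have "yd e D + w * (t - TD) < yd e D + w * (R - TD)" using tR w by simp
        also have "\<dots> = 0" unfolding R_def using w by simp
        finally show ?thesis using chk chD kD ggD unfolding w_def by simp
      qed
      then show False using tA pt by simp
    qed
  qed
  show "revT n a vv N0 l e = real_of_ereal (fst (ch e (Dn e))) - yd e (Dn e) / vv (g e)"
    using revR chD unfolding R_def w_def D_def gg_def by simp
  show "fst (path n a vv N0 l e (revT n a vv N0 l e)) = g e" using revR pathR gg_def by simp
  have T1X: "T1 \<le> TX"
    using T_mono'[of "D+1+0" "D+1+D" e] ch1 chX by simp
  have TXs: "ereal TX < fst (ch e (Suc (D+1+D)))" by (rule T_strict[OF _ chX]) (use ep in auto)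
  have exN: "gg + 1 + D = Suc N0" using ggD DN by simp
  have pathX: "path n a vv N0 l e TX = (Suc N0, yu e D)"
    using path_piece[OF chX _ TXs] exN by simp
  have exX: "exitT n a vv N0 l {..N0} e = TX"
    unfolding exitT_def revR
  proof (rule cInf_eq_minimum)
    show "TX \<in> {t. R \<le> t \<and> fst (path n a vv N0 l e t) \<notin> {..N0}}" using pathX RT1 T1X by simp
    fix t assume tB: "t \<in> {t. R \<le> t \<and> fst (path n a vv N0 l e t) \<notin> {..N0}}"
    show "TX \<le> t"
    proof (rule ccontr)
      assume "\<not> TX \<le> t" then have tX: "t < TX" by simp
      have t0: "0 \<le> t" using tB TD0 TDR by simp
      have "ereal t < fst (ch e (Suc (D + D)))" using chX tX by simp
      then obtain k where k: "k \<le> D + D" "fst (ch e k) \<le> ereal t" "ereal t < fst (ch e (Suc k))"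
        using locate[OF t0] by blast
      have "fst (path n a vv N0 l e t) \<le> N0"
      proof (cases "k \<le> D")
        case True
        obtain Tk where chk: "ch e k = (ereal Tk, N0 - k, yd e k)"
          using chain_down[of e k] ep True unfolding D_def by auto
        have "path n a vv N0 l e t = (N0 - k, yd e k + vv (N0 - k) * (t - Tk))"
          by (rule path_piece[OF chk]) (use k chk in auto)
        then show ?thesis by simp
      next
        case False
        define i where "i = k - D - 1"
        have ki: "k = D + 1 + i" and iD: "i < D" using False k(1) unfolding i_def by auto
        obtain Tk where chk: "ch e k = (ereal Tk, gg + 1 + i, yu e i)"
          using chain_up[of e i] ep iD ki unfolding D_def gg_def by auto
        have "path n a vv N0 l e t = (gg + 1 + i, yu e i + vv (gg + 1 + i) * (t - Tk))"
          by (rule path_piece[OF chk]) (use k chk in auto)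
        then show ?thesis using iD ggD DN by simp
      qed
      then show False using tB by simp
    qed
  qed
  show "snd (path n a vv N0 l e (exitT n a vv N0 l {..N0} e)) = yu e (Dn e)"
    using exX pathX unfolding D_def by simp
qed

end


lemma Sset_up: "t \<in> Sset \<beta> y w e \<Longrightarrow> t \<le> t' \<Longrightarrow> t' \<in> Sset \<beta> y w e"
  unfolding Sset_def using Fcl_mono[of t t' \<beta> y w] by auto

lemma clock_less_iff:
  "clock (\<lambda>l. max (\<beta>*l) 0) y w e < ereal b \<longleftrightarrow>
     (\<exists>r::rat. 0 < real_of_rat r \<and> real_of_rat r < b \<and> e \<le> Fcl \<beta> y w (real_of_rat r))"
proof
  assume h: "clock (\<lambda>l. max (\<beta>*l) 0) y w e < ereal b"
  then have ne: "Sset \<beta> y w e \<noteq> {}" using clock_eq[of \<beta> y w e] by (auto split: if_splits)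
  then have "Inf (Sset \<beta> y w e) < b" using h clock_eq[of \<beta> y w e] by simp
  then obtain t where t: "t \<in> Sset \<beta> y w e" "t < b" using cInf_lessD[OF ne] by blast
  obtain q where q: "q \<in> \<rat>" "t < q" "q < b" using Rats_dense_in_real[OF t(2)] by blast
  then obtain r where r: "q = real_of_rat r" by (auto simp: Rats_def)
  have "q \<in> Sset \<beta> y w e" using Sset_up[OF t(1)] q by simp
  then show "\<exists>r::rat. 0 < real_of_rat r \<and> real_of_rat r < b \<and> e \<le> Fcl \<beta> y w (real_of_rat r)"
    using q r unfolding Sset_def by auto
next
  assume "\<exists>r::rat. 0 < real_of_rat r \<and> real_of_rat r < b \<and> e \<le> Fcl \<beta> y w (real_of_rat r)"
  then obtain r where r: "0 < real_of_rat r" "real_of_rat r < b" "e \<le> Fcl \<beta> y w (real_of_rat r)" by blast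
  then have m: "real_of_rat r \<in> Sset \<beta> y w e" unfolding Sset_def by auto
  have "Inf (Sset \<beta> y w e) \<le> real_of_rat r"
    by (rule cInf_lower[OF m]) (auto simp: Sset_def bdd_below_def intro: exI[of _ 0])
  then show "clock (\<lambda>l. max (\<beta>*l) 0) y w e < ereal b" using m r clock_eq[of \<beta> y w e] by auto
qed

lemma clock_less_inf:
  "clock (\<lambda>l. max (\<beta>*l) 0) y w e < \<infinity> \<longleftrightarrow>
     (\<exists>r::rat. 0 < real_of_rat r \<and> e \<le> Fcl \<beta> y w (real_of_rat r))"
proof
  assume h: "clock (\<lambda>l. max (\<beta>*l) 0) y w e < \<infinity>"
  then have ne: "Sset \<beta> y w e \<noteq> {}" using clock_eq[of \<beta> y w e] by (auto split: if_splits)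
  then obtain t where t: "t \<in> Sset \<beta> y w e" by blast
  have tb: "t < t + 1" by simp
  obtain q where q: "q \<in> \<rat>" "t < q" "q < t + 1" using Rats_dense_in_real[OF tb] by blast
  then obtain r where r: "q = real_of_rat r" by (auto simp: Rats_def)
  have "q \<in> Sset \<beta> y w e" using Sset_up[OF t(1)] q by simp
  then show "\<exists>r::rat. 0 < real_of_rat r \<and> e \<le> Fcl \<beta> y w (real_of_rat r)"
    using r unfolding Sset_def by auto
next
  assume "\<exists>r::rat. 0 < real_of_rat r \<and> e \<le> Fcl \<beta> y w (real_of_rat r)"
  then obtain r where r: "0 < real_of_rat r" "e \<le> Fcl \<beta> y w (real_of_rat r)" by blast
  then have m: "real_of_rat r \<in> Sset \<beta> y w e" unfolding Sset_def by auto
  then show "clock (\<lambda>l. max (\<beta>*l) 0) y w e < \<infinity>" using clock_eq[of \<beta> y w e] by auto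
qed

lemma Fcl_meas[measurable]:
  "y \<in> borel_measurable M \<Longrightarrow> (\<lambda>\<omega>. Fcl \<beta> (y \<omega>) w t) \<in> borel_measurable M"
proof -
  assume y: "y \<in> borel_measurable M"
  have "continuous_on UNIV (\<lambda>y. Fcl \<beta> y w t)"
    unfolding Fcl_def by (cases "w = 0 \<or> \<beta> = 0") (auto intro!: continuous_intros)
  then have "(\<lambda>y. Fcl \<beta> y w t) \<in> borel_measurable borel" by (rule borel_measurable_continuous_onI)
  then show ?thesis using measurable_compose[OF y] by blast
qed

lemma clock_meas:
  assumes [measurable]: "y \<in> borel_measurable M" "ee \<in> borel_measurable M"
  shows "(\<lambda>\<omega>. clock (\<lambda>l. max (\<beta>*l) 0) (y \<omega>) w (ee \<omega>)) \<in> borel_measurable M"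
proof (rule borel_measurableI_less)
  fix z :: ereal
  show "{\<omega> \<in> space M. clock (\<lambda>l. max (\<beta>*l) 0) (y \<omega>) w (ee \<omega>) < z} \<in> sets M"
  proof (cases z)
    case (real b)
    show ?thesis unfolding real clock_less_iff by measurable
  next
    case PInf
    show ?thesis unfolding PInf clock_less_inf by measurable
  next
    case MInf
    show ?thesis unfolding MInf by simp
  qed
qed


context model begin

definition "Tc e k = fst (ch e k)"
definition "Xc e k = fst (snd (ch e k))"
definition "Yc e k = snd (snd (ch e k))"
definition "hc e k = hold n a vv (Xc e k) (Yc e k) (e k)"

lemma ch_Suc_eq: "ch e (Suc k) = (if Tc e k = \<infinity> \<or> hc e k = \<infinity> then (\<infinity>, Xc e k, Yc e k)
   else (Tc e k + hc e k, target n a vv (Xc e k) (Yc e k) (e k), Yc e k + vv (Xc e k) * real_of_ereal (hc e k)))"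
  by (cases "ch e k") (simp add: jchain.simps(2) Tc_def Xc_def Yc_def hc_def Let_def)

lemma Tc_Suc: "Tc e (Suc k) = (if Tc e k = \<infinity> \<or> hc e k = \<infinity> then \<infinity> else Tc e k + hc e k)"
  using ch_Suc_eq[of e k] unfolding Tc_def[of e "Suc k"] by (simp split: if_splits)
lemma Xc_Suc: "Xc e (Suc k) = (if Tc e k = \<infinity> \<or> hc e k = \<infinity> then Xc e k else target n a vv (Xc e k) (Yc e k) (e k))"
  using ch_Suc_eq[of e k] unfolding Xc_def[of e "Suc k"] by (simp split: if_splits)
lemma Yc_Suc: "Yc e (Suc k) = (if Tc e k = \<infinity> \<or> hc e k = \<infinity> then Yc e k else Yc e k + vv (Xc e k) * real_of_ereal (hc e k))"
  using ch_Suc_eq[of e k] unfolding Yc_def[of e "Suc k"] by (simp split: if_splits)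

lemma hold_meas:
  assumes x: "x \<in> measurable M (count_space UNIV)" and y[measurable]: "y \<in> borel_measurable M"
    and ee[measurable]: "\<And>j. (\<lambda>\<omega>. ee \<omega> j) \<in> borel_measurable M"
  shows "(\<lambda>\<omega>. hold n a vv (x \<omega>) (y \<omega>) (ee \<omega>)) \<in> borel_measurable M"
proof -
  have "(\<lambda>\<omega>. hold n a vv i (y \<omega>) (ee \<omega>)) \<in> borel_measurable M" for i
    unfolding hold_def clock_a by (intro borel_measurable_Min clock_meas y ee) auto
  then show ?thesis by (rule measurable_compose_countable[OF _ x])
qed

lemma target_meas:
  assumes x: "x \<in> measurable M (count_space UNIV)" and y[measurable]: "y \<in> borel_measurable M"
    and ee[measurable]: "\<And>j. (\<lambda>\<omega>. ee \<omega> j) \<in> borel_measurable M"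
  shows "(\<lambda>\<omega>. target n a vv (x \<omega>) (y \<omega>) (ee \<omega>)) \<in> measurable M (count_space UNIV)"
proof -
  have "(\<lambda>\<omega>. target n a vv i (y \<omega>) (ee \<omega>)) \<in> measurable M (count_space UNIV)" for i
  proof -
    have [measurable]: "(\<lambda>\<omega>. clock (a i j) (y \<omega>) (vv i) (ee \<omega> j)) \<in> borel_measurable M" for j
      unfolding clock_a by (intro clock_meas y ee)
    have [measurable]: "(\<lambda>\<omega>. hold n a vv i (y \<omega>) (ee \<omega>)) \<in> borel_measurable M"
      by (rule hold_meas[OF _ y ee]) simp
    show ?thesis unfolding target_def by measurable
  qed
  then show ?thesis by (rule measurable_compose_countable[OF _ x])
qed

lemma ch_meas:
  assumes E[measurable]: "\<And>k j. (\<lambda>\<omega>. ee \<omega> k j) \<in> borel_measurable M"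
  shows "(\<lambda>\<omega>. Tc (ee \<omega>) k) \<in> borel_measurable M \<and> (\<lambda>\<omega>. Xc (ee \<omega>) k) \<in> measurable M (count_space UNIV)
     \<and> (\<lambda>\<omega>. Yc (ee \<omega>) k) \<in> borel_measurable M"
proof (induction k)
  case 0 then show ?case by (simp add: Tc_def Xc_def Yc_def)
next
  case (Suc k)
  then have [measurable]: "(\<lambda>\<omega>. Tc (ee \<omega>) k) \<in> borel_measurable M"
    "(\<lambda>\<omega>. Xc (ee \<omega>) k) \<in> measurable M (count_space UNIV)"
    "(\<lambda>\<omega>. Yc (ee \<omega>) k) \<in> borel_measurable M" by auto
  have [measurable]: "(\<lambda>\<omega>. hc (ee \<omega>) k) \<in> borel_measurable M"
    unfolding hc_def by (rule hold_meas) measurable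
  have [measurable]: "(\<lambda>\<omega>. target n a vv (Xc (ee \<omega>) k) (Yc (ee \<omega>) k) (ee \<omega> k)) \<in> measurable M (count_space UNIV)"
    by (rule target_meas) measurable
  have [measurable]: "(\<lambda>\<omega>. vv (Xc (ee \<omega>) k)) \<in> borel_measurable M"
    by measurable
  show ?case unfolding Tc_Suc Xc_Suc Yc_Suc by measurable
qed

end


context model begin

definition "kk e t = (LEAST k. ereal t < Tc e (Suc k))"
definition "sT e = real_of_ereal (SUP k. Tc e k)"

lemma path_eq: "path n a vv N0 l e t =
  (Xc e (kk e t), Yc e (kk e t) + vv (Xc e (kk e t)) * (t - real_of_ereal (Tc e (kk e t))))"
  by (simp add: path_def Let_def Tc_def Xc_def Yc_def kk_def split: prod.split)

lemma Tc0: "Tc e 0 = 0" by (simp add: Tc_def)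

lemma Tc_mono: "k \<le> k' \<Longrightarrow> Tc e k \<le> Tc e k'" unfolding Tc_def by (rule T_mono')

lemma Tc_nonneg: "0 \<le> Tc e k" unfolding Tc_def by (rule T_nonneg)

lemma kk_props:
  assumes "ereal t < Tc e (Suc k0)"
  shows "ereal t < Tc e (Suc (kk e t))" "\<And>j. j < kk e t \<Longrightarrow> Tc e (Suc j) \<le> ereal t"
proof -
  show "ereal t < Tc e (Suc (kk e t))"
    unfolding kk_def by (rule LeastI[of "\<lambda>k. ereal t < Tc e (Suc k)", OF assms])
  fix j assume "j < kk e t"
  then have "\<not> ereal t < Tc e (Suc j)" unfolding kk_def by (rule not_less_Least)
  then show "Tc e (Suc j) \<le> ereal t" by (simp add: not_less)
qed

lemma kk_eqI:
  assumes "ereal s < Tc e (Suc k)" "\<And>j. j < k \<Longrightarrow> Tc e (Suc j) \<le> ereal s"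
  shows "kk e s = k"
  unfolding kk_def
proof (rule Least_equality)
  show "ereal s < Tc e (Suc k)" by (rule assms(1))
  fix j assume j: "ereal s < Tc e (Suc j)"
  show "k \<le> j"
  proof (rule ccontr)
    assume "\<not> k \<le> j" then have "Tc e (Suc j) \<le> ereal s" using assms(2) by simp
    then show False using j by simp
  qed
qed

lemma kk_none:
  assumes "\<forall>k. \<not> ereal s < Tc e (Suc k)" "\<forall>k. \<not> ereal t < Tc e (Suc k)"
  shows "kk e s = kk e t"
proof -
  have "(\<lambda>k. ereal s < Tc e (Suc k)) = (\<lambda>k. ereal t < Tc e (Suc k))" using assms by auto
  then show ?thesis unfolding kk_def by simp
qed

lemma kk_low:
  assumes "0 \<le> t" "ereal t < Tc e (Suc k0)"
  shows "Tc e (kk e t) \<le> ereal t"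
proof (cases "kk e t")
  case 0 then show ?thesis using Tc0 assms by simp
next
  case (Suc j) then show ?thesis using kk_props(2)[OF assms(2), of j] by simp
qed

lemma SUP_fin:
  assumes "\<forall>k. \<not> ereal t < Tc e (Suc k)"
  shows "(SUP k. Tc e k) = ereal (sT e)" "0 \<le> sT e" "sT e \<le> t"
    "\<And>k. Tc e k \<le> ereal (sT e)"
proof -
  have le: "Tc e k \<le> ereal t" for k
  proof (cases k)
    case 0
    have "Tc e (Suc 0) \<le> ereal t" using assms by (simp add: not_less)
    then show ?thesis using Tc_mono[of 0 1 e] 0 by simp
  next
    case (Suc j) then show ?thesis using assms by (auto simp: not_less)
  qed
  have S1: "(SUP k. Tc e k) \<le> ereal t" by (rule SUP_least) (rule le)
  have S0: "0 \<le> (SUP k. Tc e k)" using SUP_upper[of 0 UNIV "Tc e"] Tc0 by simp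
  obtain s where s: "(SUP k. Tc e k) = ereal s" using S0 S1 by (cases "(SUP k. Tc e k)") auto
  show eq: "(SUP k. Tc e k) = ereal (sT e)" unfolding sT_def s by simp
  show "0 \<le> sT e" using S0 eq by simp
  show "sT e \<le> t" using S1 eq by simp
  fix k show "Tc e k \<le> ereal (sT e)" using SUP_upper[of k UNIV "Tc e"] eq by simp
qed

lemma rat_between:
  assumes "ereal t < b"
  shows "\<exists>r::rat. t < real_of_rat r \<and> ereal (real_of_rat r) < b"
proof -
  obtain z where z: "ereal t < ereal z" "ereal z < b" using ereal_dense2[OF assms] by blast
  then have "t < z" by simp
  then obtain q where q: "q \<in> \<rat>" "t < q" "q < z" using Rats_dense_in_real by blast
  then obtain r where "q = real_of_rat r" by (auto simp: Rats_def)
  moreover have "ereal (real_of_rat r) < ereal z" using q \<open>q = real_of_rat r\<close> by simp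
  then have "ereal (real_of_rat r) < b" using z(2) by (rule less_trans)
  ultimately show ?thesis using q by (intro exI[of _ r]) auto
qed

abbreviation "pth e t \<equiv> path n a vv N0 l e t"

lemma rev_reduce:
  assumes t0: "0 \<le> t" and tb: "ereal t < b" and ft: "0 \<le> snd (pth e t)"
  shows "(\<exists>r::rat. 0 \<le> real_of_rat r \<and> ereal (real_of_rat r) < b \<and> 0 \<le> snd (pth e (real_of_rat r)))
      \<or> (\<exists>k. 0 \<le> real_of_ereal (Tc e k) \<and> ereal (real_of_ereal (Tc e k)) < b \<and> 0 \<le> snd (pth e (real_of_ereal (Tc e k))))
      \<or> (0 \<le> sT e \<and> ereal (sT e) < b \<and> 0 \<le> snd (pth e (sT e)))"
proof (cases "\<exists>k0. ereal t < Tc e (Suc k0)")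
  case True
  then obtain k0 where k0: "ereal t < Tc e (Suc k0)" by blast
  define k where "k = kk e t"
  have lowk: "Tc e k \<le> ereal t" unfolding k_def by (rule kk_low[OF t0 k0])
  obtain p where p: "Tc e k = ereal p" using lowk Tc_nonneg[of e k] by (cases "Tc e k") auto
  have p0: "0 \<le> p" "p \<le> t" using p lowk Tc_nonneg[of e k] by auto
  have hi: "ereal t < Tc e (Suc k)" unfolding k_def by (rule kk_props(1)[OF k0])
  have same: "kk e s = k" if "p \<le> s" "ereal s < Tc e (Suc k)" for s
  proof (rule kk_eqI[OF that(2)])
    fix j assume "j < k"
    then have "Tc e (Suc j) \<le> Tc e k" by (intro Tc_mono) auto
    moreover have "ereal p \<le> ereal s" using that(1) by simp
    ultimately show "Tc e (Suc j) \<le> ereal s" using p by (metis order_trans)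
  qed
  define w where "w = vv (Xc e k)"
  define y where "y = Yc e k"
  have pe: "snd (pth e s) = y + w * (s - p)" if "p \<le> s" "ereal s < Tc e (Suc k)" for s
    using same[OF that] p unfolding path_eq w_def y_def by simp
  have fy: "0 \<le> y + w * (t - p)" using ft pe[OF p0(2) hi] by simp
  show ?thesis
  proof (cases "w \<le> 0")
    case True
    have "w * (t - p) \<le> 0" using True p0 by (simp add: mult_nonpos_nonneg)
    have pt: "ereal p \<le> ereal t" using p0 by simp
    have "ereal p < Tc e (Suc k)" using pt hi by (rule order.strict_trans1)
    then have "0 \<le> snd (pth e p)" using pe[of p] p0 fy \<open>w * (t - p) \<le> 0\<close> by simp
    moreover have "ereal p < b" using pt tb by (rule order.strict_trans1)
    ultimately show ?thesis using p p0 by (intro disjI2 disjI1 exI[of _ k]) auto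
  next
    case False
    have "ereal t < min (Tc e (Suc k)) b" using hi tb by simp
    then obtain r where r: "t < real_of_rat r" "ereal (real_of_rat r) < min (Tc e (Suc k)) b"
      using rat_between by blast
    have "w * (t - p) \<le> w * (real_of_rat r - p)" using False r by (intro mult_left_mono) auto
    then have "0 \<le> snd (pth e (real_of_rat r))" using pe[of "real_of_rat r"] r p0 fy by auto
    moreover have "0 \<le> real_of_rat r" using r t0 by linarith
    ultimately show ?thesis using r t0 by (intro disjI1 exI[of _ r]) auto
  qed
next
  case False
  then have none: "\<forall>k. \<not> ereal t < Tc e (Suc k)" by blast
  note S = SUP_fin[OF none]
  have noneS: "\<forall>k. \<not> ereal s < Tc e (Suc k)" if "sT e \<le> s" for s
  proof
    fix k
    have "Tc e (Suc k) \<le> ereal (sT e)" by (rule S(4))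
    also have "\<dots> \<le> ereal s" using that by simp
    finally show "\<not> ereal s < Tc e (Suc k)" by (simp add: not_less)
  qed
  define K where "K = kk e t"
  define w where "w = vv (Xc e K)"
  define y where "y = Yc e K"
  define p where "p = real_of_ereal (Tc e K)"
  have pe: "snd (pth e s) = y + w * (s - p)" if "sT e \<le> s" for s
    using kk_none[OF noneS[OF that] none] unfolding path_eq w_def y_def p_def K_def by simp
  have fy: "0 \<le> y + w * (t - p)" using ft pe[OF S(3)] by simp
  show ?thesis
  proof (cases "w \<le> 0")
    case True
    have "w * (t - p) \<le> w * (sT e - p)" using True S(3) by (intro mult_left_mono_neg) auto
    then have f1: "0 \<le> snd (pth e (sT e))" using pe[of "sT e"] fy by simp
    have "ereal (sT e) \<le> ereal t" using S(3) by simp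
    then have "ereal (sT e) < b" using tb by (rule order.strict_trans1)
    then show ?thesis using S(2) f1 by simp
  next
    case False
    obtain r where r: "t < real_of_rat r" "ereal (real_of_rat r) < b" using rat_between[OF tb] by blast
    have "w * (t - p) \<le> w * (real_of_rat r - p)" using False r by (intro mult_left_mono) auto
    then have "0 \<le> snd (pth e (real_of_rat r))" using pe[of "real_of_rat r"] r S(3) fy by auto
    moreover have "0 \<le> real_of_rat r" using r t0 by linarith
    ultimately show ?thesis using r t0 by (intro disjI1 exI[of _ r]) auto
  qed
qed

lemma exit_reduce:
  assumes rt: "rv \<le> t" and tb: "ereal t < b" and ft: "fst (pth e t) \<notin> B"
  shows "(rv \<le> rv \<and> ereal rv < b \<and> fst (pth e rv) \<notin> B)
      \<or> (\<exists>k. rv \<le> real_of_ereal (Tc e k) \<and> ereal (real_of_ereal (Tc e k)) < b \<and> fst (pth e (real_of_ereal (Tc e k))) \<notin> B)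
      \<or> (rv \<le> sT e \<and> ereal (sT e) < b \<and> fst (pth e (sT e)) \<notin> B)"
proof -
  have key: "\<exists>p. (p = rv \<or> (\<exists>k. p = real_of_ereal (Tc e k)) \<or> p = sT e) \<and> rv \<le> p \<and> p \<le> t \<and> kk e p = kk e t"
  proof (cases "kk e rv = kk e t")
    case True then show ?thesis using rt by (intro exI[of _ rv]) auto
  next
    case neq: False
    show ?thesis
    proof (cases "\<exists>k0. ereal t < Tc e (Suc k0)")
      case True
      then obtain k0 where k0: "ereal t < Tc e (Suc k0)" by blast
      define k where "k = kk e t"
      have hi: "ereal t < Tc e (Suc k)" unfolding k_def by (rule kk_props(1)[OF k0])
      have lo: "\<And>j. j < k \<Longrightarrow> Tc e (Suc j) \<le> ereal t" unfolding k_def by (rule kk_props(2)[OF k0])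
      have c: "0 < k \<and> ereal rv < Tc e k"
      proof (rule ccontr)
        assume "\<not> (0 < k \<and> ereal rv < Tc e k)"
        then have h: "k = 0 \<or> Tc e k \<le> ereal rv" by auto
        have "kk e rv = k"
        proof (rule kk_eqI)
          have "ereal rv \<le> ereal t" using rt by simp
          then show "ereal rv < Tc e (Suc k)" using hi by (rule order.strict_trans1)
          fix j assume "j < k"
          then have "Tc e (Suc j) \<le> Tc e k" "k \<noteq> 0" by (auto intro: Tc_mono)
          then show "Tc e (Suc j) \<le> ereal rv" using h by (metis order_trans)
        qed
        then show False using neq k_def by simp
      qed
      then obtain j0 where j0: "k = Suc j0" by (cases k) auto
      have lowk: "Tc e k \<le> ereal t" using lo[of j0] j0 by simp
      obtain p where p: "Tc e k = ereal p" using lowk c by (cases "Tc e k") auto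
      have "kk e p = k"
      proof (rule kk_eqI)
        show "ereal p < Tc e (Suc k)" using p lowk hi by (metis order.strict_trans1)
        fix j assume "j < k"
        then show "Tc e (Suc j) \<le> ereal p" using p Tc_mono[of "Suc j" k e] by simp
      qed
      moreover have "\<exists>k'. p = real_of_ereal (Tc e k')" using p by (intro exI[of _ k]) simp
      ultimately show ?thesis using p c lowk k_def by (intro exI[of _ p]) auto
    next
      case False
      then have none: "\<forall>k. \<not> ereal t < Tc e (Suc k)" by blast
      note S = SUP_fin[OF none]
      have "\<exists>j. ereal rv < Tc e (Suc j)"
      proof (rule ccontr)
        assume "\<nexists>j. ereal rv < Tc e (Suc j)"
        then have "kk e rv = kk e t" using kk_none none by blast
        then show False using neq by simp
      qed
      then obtain j where j: "ereal rv < Tc e (Suc j)" by blast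
      have "ereal rv < ereal (sT e)" using j S(4)[of "Suc j"] by (rule less_le_trans)
      then have rvs: "rv < sT e" by simp
      have noneS: "\<forall>k. \<not> ereal (sT e) < Tc e (Suc k)" using S(4) by (simp add: not_less)
      show ?thesis using kk_none[OF noneS none] rvs S(3) by (intro exI[of _ "sT e"]) auto
    qed
  qed
  then obtain p where p: "p = rv \<or> (\<exists>k. p = real_of_ereal (Tc e k)) \<or> p = sT e" "rv \<le> p" "p \<le> t" "kk e p = kk e t"
    by blast
  have "fst (pth e p) = fst (pth e t)" unfolding path_eq using p(4) by simp
  moreover have "ereal p < b"
  proof -
    have "ereal p \<le> ereal t" using p(3) by simp
    then show ?thesis using tb by (rule order.strict_trans1)
  qed
  ultimately show ?thesis using p ft by auto
qed

end


context model begin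

context
  fixes M :: "'m measure" and ee :: "'m \<Rightarrow> nat \<Rightarrow> nat \<Rightarrow> real"
  assumes E[measurable]: "\<And>k j. (\<lambda>\<omega>. ee \<omega> k j) \<in> borel_measurable M"
begin

lemma Tc_meas[measurable]: "(\<lambda>\<omega>. Tc (ee \<omega>) k) \<in> borel_measurable M"
  using ch_meas[where ee=ee and M=M and k=k] E by blast
lemma Xc_meas[measurable]: "(\<lambda>\<omega>. Xc (ee \<omega>) k) \<in> measurable M (count_space UNIV)"
  using ch_meas[where ee=ee and M=M and k=k] E by blast
lemma Yc_meas[measurable]: "(\<lambda>\<omega>. Yc (ee \<omega>) k) \<in> borel_measurable M"
  using ch_meas[where ee=ee and M=M and k=k] E by blast

lemma kk_meas:
  assumes [measurable]: "t \<in> borel_measurable M"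
  shows "(\<lambda>\<omega>. kk (ee \<omega>) (t \<omega>)) \<in> measurable M (count_space UNIV)"
  unfolding kk_def by measurable

lemma path_fst_meas:
  assumes [measurable]: "t \<in> borel_measurable M"
  shows "(\<lambda>\<omega>. fst (pth (ee \<omega>) (t \<omega>))) \<in> measurable M (count_space UNIV)"
  unfolding path_eq fst_conv
  by (rule measurable_compose_countable[OF _ kk_meas[OF assms]]) measurable

lemma path_snd_meas:
  assumes [measurable]: "t \<in> borel_measurable M"
  shows "(\<lambda>\<omega>. snd (pth (ee \<omega>) (t \<omega>))) \<in> borel_measurable M"
proof -
  have [measurable]: "(\<lambda>\<omega>. vv (Xc (ee \<omega>) i)) \<in> borel_measurable M" for i by measurable
  show ?thesis unfolding path_eq snd_conv
    by (rule measurable_compose_countable[OF _ kk_meas[OF assms],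
          where f="\<lambda>i \<omega>. Yc (ee \<omega>) i + vv (Xc (ee \<omega>) i) * (t \<omega> - real_of_ereal (Tc (ee \<omega>) i))"])
       measurable
qed

lemma sT_meas[measurable]: "(\<lambda>\<omega>. sT (ee \<omega>)) \<in> borel_measurable M"
  unfolding sT_def by measurable

lemma psnd_pred[measurable]:
  assumes [measurable]: "t \<in> borel_measurable M"
  shows "Measurable.pred M (\<lambda>\<omega>. 0 \<le> snd (pth (ee \<omega>) (t \<omega>)))"
  using path_snd_meas[OF assms] by measurable

lemma pfst_pred[measurable]:
  assumes [measurable]: "t \<in> borel_measurable M"
  shows "Measurable.pred M (\<lambda>\<omega>. fst (pth (ee \<omega>) (t \<omega>)) \<notin> B)"
  using path_fst_meas[OF assms] by measurable

lemma revT_meas[measurable]: "(\<lambda>\<omega>. revT n a vv N0 l (ee \<omega>)) \<in> borel_measurable M"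
proof (rule borel_measurableI_less)
  fix z :: real
  define Ex where "Ex \<omega> b \<longleftrightarrow> (\<exists>t. 0 \<le> t \<and> ereal t < b \<and> 0 \<le> snd (pth (ee \<omega>) t))" for \<omega> b
  define R where "R \<omega> b \<longleftrightarrow> (\<exists>r::rat. 0 \<le> real_of_rat r \<and> ereal (real_of_rat r) < b \<and> 0 \<le> snd (pth (ee \<omega>) (real_of_rat r)))
      \<or> (\<exists>k. 0 \<le> real_of_ereal (Tc (ee \<omega>) k) \<and> ereal (real_of_ereal (Tc (ee \<omega>) k)) < b \<and> 0 \<le> snd (pth (ee \<omega>) (real_of_ereal (Tc (ee \<omega>) k))))
      \<or> (0 \<le> sT (ee \<omega>) \<and> ereal (sT (ee \<omega>)) < b \<and> 0 \<le> snd (pth (ee \<omega>) (sT (ee \<omega>))))" for \<omega> b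
  have ER: "Ex \<omega> b \<longleftrightarrow> R \<omega> b" for \<omega> b
  proof
    assume "Ex \<omega> b"
    then obtain t where t: "0 \<le> t" "ereal t < b" "0 \<le> snd (pth (ee \<omega>) t)" unfolding Ex_def by blast
    show "R \<omega> b" unfolding R_def by (rule rev_reduce[OF t])
  next
    assume "R \<omega> b" then show "Ex \<omega> b" unfolding Ex_def R_def by blast
  qed
  have Rm: "Measurable.pred M (\<lambda>\<omega>. R \<omega> b)" for b unfolding R_def by measurable
  have eq: "revT n a vv N0 l (ee \<omega>) < z \<longleftrightarrow> (Ex \<omega> \<infinity> \<and> Ex \<omega> (ereal z)) \<or> (\<not> Ex \<omega> \<infinity> \<and> Inf ({}::real set) < z)" for \<omega>
  proof (cases "Ex \<omega> \<infinity>")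
    case True
    define A where "A = {t. 0 \<le> t \<and> 0 \<le> snd (pth (ee \<omega>) t)}"
    have ne: "A \<noteq> {}" using True unfolding Ex_def A_def by auto
    have bd: "bdd_below A" unfolding A_def bdd_below_def by (intro exI[of _ 0]) auto
    have "revT n a vv N0 l (ee \<omega>) = Inf A" unfolding revT_def A_def ..
    then have "revT n a vv N0 l (ee \<omega>) < z \<longleftrightarrow> (\<exists>t\<in>A. t < z)" using cInf_less_iff[OF ne bd] by simp
    also have "\<dots> \<longleftrightarrow> Ex \<omega> (ereal z)" unfolding A_def Ex_def by auto
    finally show ?thesis using True by simp
  next
    case False
    then have emp: "{t. 0 \<le> t \<and> 0 \<le> snd (pth (ee \<omega>) t)} = {}" unfolding Ex_def by auto
    show ?thesis using False unfolding revT_def emp by simp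
  qed
  have "{\<omega> \<in> space M. revT n a vv N0 l (ee \<omega>) < z} =
      {\<omega> \<in> space M. (R \<omega> \<infinity> \<and> R \<omega> (ereal z)) \<or> (\<not> R \<omega> \<infinity> \<and> Inf ({}::real set) < z)}"
    by (simp only: eq ER)
  also have "\<dots> \<in> sets M"
  proof -
    have "Measurable.pred M (\<lambda>\<omega>. (R \<omega> \<infinity> \<and> R \<omega> (ereal z)) \<or> (\<not> R \<omega> \<infinity> \<and> Inf ({}::real set) < z))"
      using Rm[of \<infinity>] Rm[of "ereal z"] by (intro pred_intros_logic) auto
    then show ?thesis by (simp add: Measurable.pred_def)
  qed
  finally show "{\<omega> \<in> space M. revT n a vv N0 l (ee \<omega>) < z} \<in> sets M" .
qed

lemma exitT_meas[measurable]: "(\<lambda>\<omega>. exitT n a vv N0 l {..N0} (ee \<omega>)) \<in> borel_measurable M"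
proof (rule borel_measurableI_less)
  fix z :: real
  define rv where "rv \<omega> = revT n a vv N0 l (ee \<omega>)" for \<omega>
  have [measurable]: "rv \<in> borel_measurable M" unfolding rv_def by measurable
  define Ex where "Ex \<omega> b \<longleftrightarrow> (\<exists>t. rv \<omega> \<le> t \<and> ereal t < b \<and> fst (pth (ee \<omega>) t) \<notin> {..N0})" for \<omega> b
  define R where "R \<omega> b \<longleftrightarrow> (rv \<omega> \<le> rv \<omega> \<and> ereal (rv \<omega>) < b \<and> fst (pth (ee \<omega>) (rv \<omega>)) \<notin> {..N0})
      \<or> (\<exists>k. rv \<omega> \<le> real_of_ereal (Tc (ee \<omega>) k) \<and> ereal (real_of_ereal (Tc (ee \<omega>) k)) < b \<and> fst (pth (ee \<omega>) (real_of_ereal (Tc (ee \<omega>) k))) \<notin> {..N0})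
      \<or> (rv \<omega> \<le> sT (ee \<omega>) \<and> ereal (sT (ee \<omega>)) < b \<and> fst (pth (ee \<omega>) (sT (ee \<omega>))) \<notin> {..N0})" for \<omega> b
  have ER: "Ex \<omega> b \<longleftrightarrow> R \<omega> b" for \<omega> b
  proof
    assume "Ex \<omega> b"
    then obtain t where t: "rv \<omega> \<le> t" "ereal t < b" "fst (pth (ee \<omega>) t) \<notin> {..N0}" unfolding Ex_def by blast
    show "R \<omega> b" unfolding R_def by (rule exit_reduce[OF t])
  next
    assume "R \<omega> b" then show "Ex \<omega> b" unfolding Ex_def R_def by blast
  qed
  have Rm: "Measurable.pred M (\<lambda>\<omega>. R \<omega> b)" for b unfolding R_def by measurable
  have eq: "exitT n a vv N0 l {..N0} (ee \<omega>) < z \<longleftrightarrow> (Ex \<omega> \<infinity> \<and> Ex \<omega> (ereal z)) \<or> (\<not> Ex \<omega> \<infinity> \<and> Inf ({}::real set) < z)" for \<omega>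
  proof (cases "Ex \<omega> \<infinity>")
    case True
    define A where "A = {t. rv \<omega> \<le> t \<and> fst (pth (ee \<omega>) t) \<notin> {..N0}}"
    have ne: "A \<noteq> {}" using True unfolding Ex_def A_def by auto
    have bd: "bdd_below A" unfolding A_def bdd_below_def by (intro exI[of _ "rv \<omega>"]) auto
    have "exitT n a vv N0 l {..N0} (ee \<omega>) = Inf A" unfolding exitT_def A_def rv_def ..
    then have "exitT n a vv N0 l {..N0} (ee \<omega>) < z \<longleftrightarrow> (\<exists>t\<in>A. t < z)" using cInf_less_iff[OF ne bd] by simp
    also have "\<dots> \<longleftrightarrow> Ex \<omega> (ereal z)" unfolding A_def Ex_def by auto
    finally show ?thesis using True by simp
  next
    case False
    then have emp: "{t. rv \<omega> \<le> t \<and> fst (pth (ee \<omega>) t) \<notin> {..N0}} = {}" unfolding Ex_def by auto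
    show ?thesis using False unfolding exitT_def rv_def[symmetric] emp by simp
  qed
  have "{\<omega> \<in> space M. exitT n a vv N0 l {..N0} (ee \<omega>) < z} =
      {\<omega> \<in> space M. (R \<omega> \<infinity> \<and> R \<omega> (ereal z)) \<or> (\<not> R \<omega> \<infinity> \<and> Inf ({}::real set) < z)}"
    by (simp only: eq ER)
  also have "\<dots> \<in> sets M"
  proof -
    have "Measurable.pred M (\<lambda>\<omega>. (R \<omega> \<infinity> \<and> R \<omega> (ereal z)) \<or> (\<not> R \<omega> \<infinity> \<and> Inf ({}::real set) < z))"
      using Rm[of \<infinity>] Rm[of "ereal z"] by (intro pred_intros_logic) auto
    then show ?thesis by (simp add: Measurable.pred_def)
  qed
  finally show "{\<omega> \<in> space M. exitT n a vv N0 l {..N0} (ee \<omega>) < z} \<in> sets M" .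
qed

lemma final_meas: "(\<lambda>\<omega>. snd (pth (ee \<omega>) (exitT n a vv N0 l {..N0} (ee \<omega>)))) \<in> borel_measurable M"
  by (rule path_snd_meas) measurable

lemma G_meas: "(\<lambda>\<omega>. fst (pth (ee \<omega>) (revT n a vv N0 l (ee \<omega>)))) \<in> measurable M (count_space UNIV)"
  by (rule path_fst_meas) measurable

end
end


lemma (in prob_space) indep_prod_lemma:
  assumes iv: "indep_var Ma U Mb W" and S: "S \<in> sets Ma" and dW: "distr M Mb W = Q"
    and psi: "\<psi> \<in> borel_measurable Mb" and A: "A \<in> sets borel"
  shows "prob {\<omega> \<in> space M. U \<omega> \<in> S \<and> \<psi> (W \<omega>) \<in> A} =
         prob {\<omega> \<in> space M. U \<omega> \<in> S} * measure Q (\<psi> -` A \<inter> space Mb)"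
proof -
  have U: "U \<in> measurable M Ma" using iv by (rule indep_var_rv1)
  have W: "W \<in> measurable M Mb" using iv by (rule indep_var_rv2)
  define B where "B = \<psi> -` A \<inter> space Mb"
  have B: "B \<in> sets Mb" unfolding B_def using psi A by (rule measurable_sets)
  have "prob ((\<lambda>x. (U x, W x)) -` (S \<times> B) \<inter> space M) = prob (U -` S \<inter> space M) * prob (W -` B \<inter> space M)"
    by (rule indep_varD[OF iv S B])
  moreover have "(\<lambda>x. (U x, W x)) -` (S \<times> B) \<inter> space M = {\<omega> \<in> space M. U \<omega> \<in> S \<and> \<psi> (W \<omega>) \<in> A}"
    using measurable_space[OF W] unfolding B_def by auto
  moreover have "U -` S \<inter> space M = {\<omega> \<in> space M. U \<omega> \<in> S}" by auto
  moreover have "prob (W -` B \<inter> space M) = measure Q B"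
    using measure_distr[OF W B] dW by simp
  ultimately show ?thesis unfolding B_def by simp
qed

context model begin

lemma Dn_eq_iff: "Dn e = d \<longleftrightarrow> (\<forall>k<d. down e k) \<and> \<not> down e d"
proof
  assume "Dn e = d" then show "(\<forall>k<d. down e k) \<and> \<not> down e d" using down_lt not_down_Dn by blast
next
  assume h: "(\<forall>k<d. down e k) \<and> \<not> down e d"
  show "Dn e = d" unfolding Dn_def
  proof (rule Least_equality)
    show "\<not> down e d" using h by simp
    fix y assume "\<not> down e y" then show "d \<le> y" using h by (meson not_less)
  qed
qed

lemma yd_agree:
  assumes "\<And>k. k < d \<Longrightarrow> e k (N0-k-1) = e' k (N0-k-1)"
  shows "k \<le> d \<Longrightarrow> yd e k = yd e' k"
proof (induction k)
  case 0 then show ?case by simp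
next
  case (Suc k) then show ?case using assms[of k] by simp
qed

lemma Dn_agree:
  assumes "\<And>k. k \<le> d \<Longrightarrow> e k (N0-k-1) = e' k (N0-k-1)"
  shows "Dn e = d \<longleftrightarrow> Dn e' = d"
proof -
  have y: "yd e k = yd e' k" if "k \<le> d" for k
    by (rule yd_agree[OF _ that]) (use assms in auto)
  have "down e k \<longleftrightarrow> down e' k" if "k \<le> d" for k
    unfolding down_def using y[OF that] assms[OF that] by simp
  then show ?thesis unfolding Dn_eq_iff by auto
qed

definition Idx :: "nat \<Rightarrow> (nat \<times> nat) set" where "Idx d = (\<lambda>k. (k, N0-k-1)) ` {..d}"

lemma yd_meas:
  "k \<le> d \<Longrightarrow> (\<lambda>u. yd (\<lambda>k j. u (k,j)) k) \<in> borel_measurable (PiM (Idx d) (\<lambda>_. borel))"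
proof (induction k)
  case 0 then show ?case by simp
next
  case (Suc k)
  then have [measurable]: "(\<lambda>u. yd (\<lambda>k j. u (k,j)) k) \<in> borel_measurable (PiM (Idx d) (\<lambda>_. borel))" by simp
  have "(k, N0-k-1) \<in> Idx d" using Suc.prems unfolding Idx_def by auto
  then have [measurable]: "(\<lambda>u. u (k, N0-k-1)) \<in> borel_measurable (PiM (Idx d) (\<lambda>_. borel))"
    by (rule measurable_component_singleton)
  show ?case unfolding yd.simps by measurable
qed

lemma down_meas:
  assumes kd: "k \<le> d"
  shows "Measurable.pred (PiM (Idx d) (\<lambda>_. borel)) (\<lambda>u. down (\<lambda>k j. u (k,j)) k)"
proof -
  define P where "P = PiM (Idx d) (\<lambda>_. borel::real measure)"
  have m1: "(\<lambda>u. yd (\<lambda>k j. u (k,j)) k) \<in> borel_measurable P"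
    unfolding P_def using yd_meas kd by simp
  have "(k, N0-k-1) \<in> Idx d" using kd unfolding Idx_def by auto
  then have m2: "(\<lambda>u. u (k, N0-k-1)) \<in> borel_measurable P"
    unfolding P_def by (rule measurable_component_singleton)
  have m3: "(\<lambda>u. c (N0-k-1) * (yd (\<lambda>k j. u (k,j)) k)^2 / (2 * vv (N0-k))) \<in> borel_measurable P"
    by (intro borel_measurable_divide borel_measurable_times borel_measurable_const borel_measurable_power m1)
  have s1: "{u \<in> space P. yd (\<lambda>k j. u (k,j)) k < 0} \<in> sets P"
    by (rule borel_measurable_less[OF m1 borel_measurable_const])
  have s2: "{u \<in> space P. u (k, N0-k-1) \<le> c (N0-k-1) * (yd (\<lambda>k j. u (k,j)) k)^2 / (2 * vv (N0-k))} \<in> sets P"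
    by (rule borel_measurable_le[OF m2 m3])
  have "{u \<in> space P. down (\<lambda>k j. u (k,j)) k} = (if k < N0 then
      {u \<in> space P. yd (\<lambda>k j. u (k,j)) k < 0} \<inter> {u \<in> space P. u (k, N0-k-1) \<le> c (N0-k-1) * (yd (\<lambda>k j. u (k,j)) k)^2 / (2 * vv (N0-k))}
      else {})"
    unfolding down_def by auto
  also have "\<dots> \<in> sets P" using s1 s2 by auto
  finally show ?thesis unfolding P_def Measurable.pred_def .
qed

lemma Dn_set_meas: "{u \<in> space (PiM (Idx d) (\<lambda>_. borel)). Dn (\<lambda>k j. u (k,j)) = d} \<in> sets (PiM (Idx d) (\<lambda>_. borel))"
proof -
  have P1: "Measurable.pred (PiM (Idx d) (\<lambda>_. borel)) (\<lambda>u. \<forall>k\<in>{..<d}. down (\<lambda>k j. u (k,j)) k)"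
    by (rule pred_intros_countable_bounded(3)) (rule down_meas, simp)
  have P2: "Measurable.pred (PiM (Idx d) (\<lambda>_. borel)) (\<lambda>u. \<not> down (\<lambda>k j. u (k,j)) d)"
    using down_meas[of d d] unfolding Measurable.pred_def by (simp add: sets.sets_Collect_neg)
  have "{u \<in> space (PiM (Idx d) (\<lambda>_. borel)). Dn (\<lambda>k j. u (k,j)) = d} =
     {u \<in> space (PiM (Idx d) (\<lambda>_. borel)). \<forall>k\<in>{..<d}. down (\<lambda>k j. u (k,j)) k} \<inter>
     {u \<in> space (PiM (Idx d) (\<lambda>_. borel)). \<not> down (\<lambda>k j. u (k,j)) d}"
    unfolding Dn_eq_iff by auto
  also have "\<dots> \<in> sets (PiM (Idx d) (\<lambda>_. borel))"
    using P1 P2 unfolding Measurable.pred_def by (rule sets.Int)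
  finally show ?thesis .
qed

end


abbreviation "Exd \<equiv> density lborel (exponential_density (1::real))"

lemma psi_meas:
  "(\<lambda>w. sqrt (2 * (\<Sum>j\<in>{g..N}. lm j * w j))) \<in> borel_measurable (PiM {g..N} (\<lambda>_. borel))"
proof -
  have c: "(\<lambda>w. w j) \<in> borel_measurable (PiM {g..N} (\<lambda>_. borel))" if "j \<in> {g..N}" for j
    using measurable_component_singleton[OF that, of "\<lambda>_. borel"] by simp
  have "(\<lambda>w. \<Sum>j\<in>{g..N}. lm j * w j) \<in> borel_measurable (PiM {g..N} (\<lambda>_. borel))"
    by (intro borel_measurable_sum borel_measurable_times borel_measurable_const c)
  then have "(\<lambda>w. 2 * (\<Sum>j\<in>{g..N}. lm j * w j)) \<in> borel_measurable (PiM {g..N} (\<lambda>_. borel))"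
    by (intro borel_measurable_times borel_measurable_const)
  then show ?thesis using measurable_compose[OF _ borel_measurable_sqrt] by blast
qed

locale pmodel = model n N0 N1 vv l for n N0 N1 vv l +
  fixes M :: "'a measure" and E :: "nat \<Rightarrow> nat \<Rightarrow> 'a \<Rightarrow> real"
  assumes M_prob: "prob_space M"
    and E_indep: "prob_space.indep_vars M (\<lambda>_. borel) (\<lambda>(k, j). E k j) UNIV"
    and E_exp: "\<And>k j. distributed M lborel (E k j) (exponential_density 1)"
begin

sublocale PM: prob_space M by (rule M_prob)

lemma E_meas[measurable]: "E k j \<in> borel_measurable M"
  using distributed_measurable[OF E_exp[of k j]] by simp

lemma E_meas': "(\<lambda>\<omega>. E k j \<omega>) \<in> borel_measurable M"
  using E_meas by simp

lemma AE_pos: "AE \<omega> in M. \<forall>k j. 0 < E k j \<omega>"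
proof -
  have "AE \<omega> in M. 0 < E k j \<omega>" for k j
  proof -
    have "PM.prob {\<omega> \<in> space M. 0 < E k j \<omega>} = 1"
      using PM.exponential_distributedD_gt[OF E_exp[of k j], of 0] by simp
    then have "AE \<omega> in M. \<omega> \<in> {\<omega> \<in> space M. 0 < E k j \<omega>}" by (rule PM.AE_prob_1)
    then show ?thesis by eventually_elim auto
  qed
  then show ?thesis by (simp add: AE_all_countable)
qed

definition "fj d j = (d + j - (N0 - d), Suc j)"
definition "Jd d = fj d ` {N0 - d..N0}"
definition "U d \<omega> = restrict (\<lambda>i. (\<lambda>(k, j). E k j) i \<omega>) (Idx d)"
definition "V d \<omega> = restrict (\<lambda>i. (\<lambda>(k, j). E k j) i \<omega>) (Jd d)"
definition "rho d u = restrict (\<lambda>j. u (fj d j)) {N0 - d..N0}"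
definition "W d \<omega> = restrict (\<lambda>j. E (d + j - (N0 - d)) (Suc j) \<omega>) {N0 - d..N0}"

lemma disj: "d \<le> N0 \<Longrightarrow> Idx d \<inter> Jd d = {}"
  unfolding Idx_def Jd_def fj_def by auto

lemma fj_inj: "inj_on (fj d) {N0 - d..N0}"
  unfolding fj_def inj_on_def by auto

lemma iv1: "d \<le> N0 \<Longrightarrow> PM.indep_var (PiM (Idx d) (\<lambda>_. borel)) (U d) (PiM (Jd d) (\<lambda>_. borel)) (V d)"
  unfolding U_def V_def by (rule PM.indep_var_restrict[OF E_indep disj]) auto

lemma rho_meas: "rho d \<in> measurable (PiM (Jd d) (\<lambda>_. borel)) (PiM {N0 - d..N0} (\<lambda>_. borel::real measure))"
  unfolding rho_def
proof (rule measurable_restrict)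
  fix j assume "j \<in> {N0 - d..N0}"
  then have "fj d j \<in> Jd d" unfolding Jd_def by auto
  then show "(\<lambda>u. u (fj d j)) \<in> measurable (PiM (Jd d) (\<lambda>_. borel)) borel"
    by (rule measurable_component_singleton)
qed

lemma distr_E: "distr M borel (E k j) = Exd"
proof -
  have "distr M borel (E k j) = distr M lborel (E k j)" by (rule distr_cong) auto
  also have "\<dots> = Exd" by (rule distributed_distr_eq_density[OF E_exp])
  finally show ?thesis .
qed

lemma distr_V: "distr M (PiM (Jd d) (\<lambda>_. borel)) (V d) = PiM (Jd d) (\<lambda>_. Exd)"
proof -
  have ne: "Jd d \<noteq> {}" unfolding Jd_def by auto
  have ind: "PM.indep_vars (\<lambda>_. borel) (\<lambda>(k, j). E k j) (Jd d)"
    by (rule PM.indep_vars_subset[OF E_indep]) auto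
  have rv: "(\<lambda>(k, j). E k j) i \<in> borel_measurable M" for i
    by (cases i) (simp add: E_meas)
  have "distr M (PiM (Jd d) (\<lambda>_. borel)) (V d) = PiM (Jd d) (\<lambda>i. distr M borel ((\<lambda>(k, j). E k j) i))"
    using PM.indep_vars_iff_distr_eq_PiM'[OF ne, where M'="\<lambda>_. borel" and X="\<lambda>(k, j). E k j"] ind rv
    unfolding V_def by simp
  also have "\<dots> = PiM (Jd d) (\<lambda>_. Exd)"
    by (rule PiM_cong) (auto simp: distr_E split: prod.split)
  finally show ?thesis .
qed

lemma reindex_measure:
  assumes psi: "psi \<in> borel_measurable (PiM {N0 - d..N0} (\<lambda>_. borel))" and A: "A \<in> sets borel"
  shows "measure (PiM (Jd d) (\<lambda>_. Exd)) ((\<lambda>u. psi (rho d u)) -` A \<inter> space (PiM (Jd d) (\<lambda>_. borel)))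
       = measure (PiM {N0 - d..N0} (\<lambda>_. Exd)) (psi -` A \<inter> space (PiM {N0 - d..N0} (\<lambda>_. borel)))"
proof -
  define S where "S = psi -` A \<inter> space (PiM {N0 - d..N0} (\<lambda>_. borel))"
  have sp1: "space (PiM (Jd d) (\<lambda>_. Exd)) = space (PiM (Jd d) (\<lambda>_. borel))" by (simp add: space_PiM)
  have sp2: "space (PiM {N0 - d..N0} (\<lambda>_. Exd)) = space (PiM {N0 - d..N0} (\<lambda>_. borel))" by (simp add: space_PiM)
  have st1: "sets (PiM (Jd d) (\<lambda>_. Exd)) = sets (PiM (Jd d) (\<lambda>_. borel))" by (intro sets_PiM_cong) auto
  have st2: "sets (PiM {N0 - d..N0} (\<lambda>_. Exd)) = sets (PiM {N0 - d..N0} (\<lambda>_. borel))" by (intro sets_PiM_cong) auto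
  have rm: "rho d \<in> measurable (PiM (Jd d) (\<lambda>_. Exd)) (PiM {N0 - d..N0} (\<lambda>_. Exd))"
    using rho_meas[of d] by (simp add: measurable_def sp1 sp2 st1 st2)
  have S: "S \<in> sets (PiM {N0 - d..N0} (\<lambda>_. Exd))" unfolding S_def st2 using psi A by (rule measurable_sets)
  have D: "distr (PiM (Jd d) (\<lambda>_. Exd)) (PiM {N0 - d..N0} (\<lambda>_. Exd)) (rho d) = PiM {N0 - d..N0} (\<lambda>_. Exd)"
    using distr_PiM_reindex[of "Jd d" "\<lambda>_. Exd" "fj d" "{N0 - d..N0}"] fj_inj prob_space_exponential_density
    unfolding Jd_def rho_def by auto
  have "measure (PiM {N0 - d..N0} (\<lambda>_. Exd)) S = measure (PiM (Jd d) (\<lambda>_. Exd)) (rho d -` S \<inter> space (PiM (Jd d) (\<lambda>_. Exd)))"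
    using measure_distr[OF rm S] D by simp
  moreover have "rho d -` S \<inter> space (PiM (Jd d) (\<lambda>_. Exd)) = (\<lambda>u. psi (rho d u)) -` A \<inter> space (PiM (Jd d) (\<lambda>_. borel))"
    using measurable_space[OF rm] unfolding S_def sp1 sp2[symmetric] by auto
  ultimately show ?thesis unfolding S_def by simp
qed

definition "SB d = {u \<in> space (PiM (Idx d) (\<lambda>_. borel::real measure)). Dn (\<lambda>k j. u (k,j)) = d}"
definition "psi gi w = sqrt (2 * (\<Sum>j\<in>{gi..N0}. lam n N0 N1 vv j * w j))"
definition "cq gi A = measure (PiM {gi..N0} (\<lambda>_. Exd)) (psi gi -` A \<inter> space (PiM {gi..N0} (\<lambda>_. borel)))"

lemma psi_meas': "psi gi \<in> borel_measurable (PiM {gi..N0} (\<lambda>_. borel))"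
  unfolding psi_def[abs_def] by (rule psi_meas)

lemma U_meas: "U d \<in> measurable M (PiM (Idx d) (\<lambda>_. borel))"
  unfolding U_def by (rule measurable_restrict) (auto split: prod.split)

lemma V_meas: "V d \<in> measurable M (PiM (Jd d) (\<lambda>_. borel))"
  unfolding V_def by (rule measurable_restrict) (auto split: prod.split)

lemma event_U: "\<omega> \<in> space M \<Longrightarrow> U d \<omega> \<in> SB d \<longleftrightarrow> Dn (\<lambda>k j. E k j \<omega>) = d"
proof -
  assume \<omega>: "\<omega> \<in> space M"
  have sp: "U d \<omega> \<in> space (PiM (Idx d) (\<lambda>_. borel))" using measurable_space[OF U_meas \<omega>] .
  have "Dn (\<lambda>k j. U d \<omega> (k,j)) = d \<longleftrightarrow> Dn (\<lambda>k j. E k j \<omega>) = d"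
    by (rule Dn_agree) (auto simp: U_def Idx_def)
  then show ?thesis unfolding SB_def using sp by simp
qed

lemma Dn_sets: "{\<omega> \<in> space M. Dn (\<lambda>k j. E k j \<omega>) = d} \<in> sets M"
proof -
  have "{\<omega> \<in> space M. Dn (\<lambda>k j. E k j \<omega>) = d} = U d -` SB d \<inter> space M" using event_U by auto
  also have "\<dots> \<in> sets M" using U_meas Dn_set_meas unfolding SB_def by (rule measurable_sets)
  finally show ?thesis .
qed

lemma M_prod:
  assumes d: "d \<le> N0" and A: "A \<in> sets borel"
  shows "PM.prob {\<omega> \<in> space M. Dn (\<lambda>k j. E k j \<omega>) = d \<and> psi (N0 - d) (rho d (V d \<omega>)) \<in> A}
       = PM.prob {\<omega> \<in> space M. Dn (\<lambda>k j. E k j \<omega>) = d} * cq (N0 - d) A"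
proof -
  have pm: "(\<lambda>u. psi (N0 - d) (rho d u)) \<in> borel_measurable (PiM (Jd d) (\<lambda>_. borel))"
    using measurable_comp[OF rho_meas psi_meas'] by (simp add: comp_def)
  have SBs: "SB d \<in> sets (PiM (Idx d) (\<lambda>_. borel))" unfolding SB_def by (rule Dn_set_meas)
  have "PM.prob {\<omega> \<in> space M. U d \<omega> \<in> SB d \<and> psi (N0 - d) (rho d (V d \<omega>)) \<in> A}
     = PM.prob {\<omega> \<in> space M. U d \<omega> \<in> SB d} * measure (PiM (Jd d) (\<lambda>_. Exd)) ((\<lambda>u. psi (N0 - d) (rho d u)) -` A \<inter> space (PiM (Jd d) (\<lambda>_. borel)))"
    by (rule PM.indep_prod_lemma[OF iv1[OF d] SBs distr_V pm A])
  also have "measure (PiM (Jd d) (\<lambda>_. Exd)) ((\<lambda>u. psi (N0 - d) (rho d u)) -` A \<inter> space (PiM (Jd d) (\<lambda>_. borel))) = cq (N0 - d) A"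
    unfolding cq_def by (rule reindex_measure[OF psi_meas' A])
  finally show ?thesis using event_U by (simp cong: conj_cong)
qed

lemma yu_eq:
  assumes "Dn e = d"
  shows "yu e d = psi (N0 - d) (\<lambda>j. e (d + j - (N0 - d)) (Suc j))"
proof -
  have dN: "d \<le> N0" using Dn_le assms by metis
  have ge: "g e = N0 - d" unfolding g_def assms ..
  have "(\<Sum>j\<in>{N0 - d..N0}. lam n N0 N1 vv j * e (d + j - (N0 - d)) (Suc j))
      = (\<Sum>j\<in>{0 + (N0 - d)..d + (N0 - d)}. lam n N0 N1 vv j * e (d + j - (N0 - d)) (Suc j))"
    using dN by simp
  also have "\<dots> = (\<Sum>m\<in>{0..d}. lam n N0 N1 vv (m + (N0 - d)) * e (d + (m + (N0 - d)) - (N0 - d)) (Suc (m + (N0 - d))))"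
    by (rule sum.shift_bounds_cl_nat_ivl)
  also have "\<dots> = (\<Sum>m\<le>d. lam n N0 N1 vv (g e + m) * e (Dn e + m) (g e + m + 1))"
    using assms ge by (intro sum.cong) (auto simp: add.commute atMost_atLeast0)
  finally show ?thesis unfolding yu_def ysum_def psi_def using assms by simp
qed

lemma rhoV: "rho d (V d \<omega>) = restrict (\<lambda>j. E (d + j - (N0 - d)) (Suc j) \<omega>) {N0 - d..N0}"
  unfolding rho_def V_def Jd_def by (auto simp: fun_eq_iff fj_def)

lemma psi_restrict: "psi gi (restrict w {gi..N0}) = psi gi w"
  unfolding psi_def by (intro arg_cong[where f=sqrt] arg_cong[where f="\<lambda>x. 2 * x"] sum.cong) auto

abbreviation "fL \<omega> \<equiv> snd (pth (\<lambda>k j. E k j \<omega>) (exitT n a vv N0 l {..N0} (\<lambda>k j. E k j \<omega>)))"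
abbreviation "GL \<omega> \<equiv> fst (pth (\<lambda>k j. E k j \<omega>) (revT n a vv N0 l (\<lambda>k j. E k j \<omega>)))"

lemma fL_meas: "(\<lambda>\<omega>. fL \<omega>) \<in> borel_measurable M"
  by (rule final_meas) (rule E_meas')

lemma GL_meas: "(\<lambda>\<omega>. GL \<omega>) \<in> measurable M (count_space UNIV)"
  by (rule G_meas) (rule E_meas')

lemma fL_eq:
  assumes "\<forall>k j. 0 < E k j \<omega>"
  shows "fL \<omega> = psi (N0 - Dn (\<lambda>k j. E k j \<omega>)) (rho (Dn (\<lambda>k j. E k j \<omega>)) (V (Dn (\<lambda>k j. E k j \<omega>)) \<omega>))"
proof -
  define d where "d = Dn (\<lambda>k j. E k j \<omega>)"
  have "fL \<omega> = yu (\<lambda>k j. E k j \<omega>) d"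
    using pathwise(3)[of "\<lambda>k j. E k j \<omega>"] assms unfolding d_def by simp
  also have "\<dots> = psi (N0 - d) (\<lambda>j. E (d + j - (N0 - d)) (Suc j) \<omega>)"
    by (rule yu_eq) (simp add: d_def)
  also have "\<dots> = psi (N0 - d) (rho d (V d \<omega>))" unfolding rhoV psi_restrict ..
  finally show ?thesis unfolding d_def .
qed

lemma GL_eq:
  assumes "\<forall>k j. 0 < E k j \<omega>"
  shows "GL \<omega> = N0 - Dn (\<lambda>k j. E k j \<omega>)"
  using pathwise(2)[of "\<lambda>k j. E k j \<omega>"] assms unfolding g_def by simp

lemma LHS:
  assumes A: "A \<in> sets borel"
  shows "PM.prob {\<omega> \<in> space M. fL \<omega> \<in> A} =
     (\<Sum>d\<le>N0. PM.prob {\<omega> \<in> space M. Dn (\<lambda>k j. E k j \<omega>) = d} * cq (N0 - d) A)"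
proof -
  define B where "B d = {\<omega> \<in> space M. Dn (\<lambda>k j. E k j \<omega>) = d \<and> psi (N0 - d) (rho d (V d \<omega>)) \<in> A}" for d
  have Bs: "B d \<in> sets M" for d
  proof -
    have pm: "(\<lambda>\<omega>. psi (N0 - d) (rho d (V d \<omega>))) \<in> borel_measurable M"
      using measurable_comp[OF measurable_comp[OF V_meas rho_meas] psi_meas'] by (simp add: comp_def)
    have "B d = {\<omega> \<in> space M. Dn (\<lambda>k j. E k j \<omega>) = d} \<inter> ((\<lambda>\<omega>. psi (N0 - d) (rho d (V d \<omega>))) -` A \<inter> space M)"
      unfolding B_def by auto
    also have "\<dots> \<in> sets M" using Dn_sets measurable_sets[OF pm A] by (rule sets.Int)
    finally show ?thesis .
  qed
  have fs: "{\<omega> \<in> space M. fL \<omega> \<in> A} \<in> sets M"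
    using measurable_sets[OF fL_meas A] by (simp add: vimage_def Int_def conj_commute)
  have "PM.prob {\<omega> \<in> space M. fL \<omega> \<in> A} = PM.prob (\<Union>d\<in>{..N0}. B d)"
  proof (rule PM.finite_measure_eq_AE)
    show "AE x in M. (x \<in> {\<omega> \<in> space M. fL \<omega> \<in> A}) = (x \<in> (\<Union>d\<in>{..N0}. B d))"
      using AE_pos
    proof (eventually_elim)
      case (elim \<omega>)
      show ?case using fL_eq[OF elim] Dn_le[of "\<lambda>k j. E k j \<omega>"] unfolding B_def by auto
    qed
  qed (use fs Bs in auto)
  also have "\<dots> = (\<Sum>d\<le>N0. PM.prob (B d))"
    by (rule PM.finite_measure_finite_Union) (use Bs in \<open>auto simp: disjoint_family_on_def B_def\<close>)
  also have "\<dots> = (\<Sum>d\<le>N0. PM.prob {\<omega> \<in> space M. Dn (\<lambda>k j. E k j \<omega>) = d} * cq (N0 - d) A)"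
    unfolding B_def by (intro sum.cong refl M_prod A) simp
  finally show ?thesis .
qed

lemma Dn_total: "(\<Sum>d\<le>N0. PM.prob {\<omega> \<in> space M. Dn (\<lambda>k j. E k j \<omega>) = d}) = 1"
proof -
  have "(\<Sum>d\<le>N0. PM.prob {\<omega> \<in> space M. Dn (\<lambda>k j. E k j \<omega>) = d}) = PM.prob (\<Union>d\<in>{..N0}. {\<omega> \<in> space M. Dn (\<lambda>k j. E k j \<omega>) = d})"
    by (rule PM.finite_measure_finite_Union[symmetric]) (use Dn_sets in \<open>auto simp: disjoint_family_on_def\<close>)
  also have "(\<Union>d\<in>{..N0}. {\<omega> \<in> space M. Dn (\<lambda>k j. E k j \<omega>) = d}) = space M"
    using Dn_le by auto
  finally show ?thesis using PM.prob_space by simp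
qed

lemma G_law: "j \<le> N0 \<Longrightarrow> PM.prob {\<omega> \<in> space M. GL \<omega> = j} = PM.prob {\<omega> \<in> space M. Dn (\<lambda>k j. E k j \<omega>) = N0 - j}"
proof (rule PM.finite_measure_eq_AE)
  assume j: "j \<le> N0"
  show "AE x in M. (x \<in> {\<omega> \<in> space M. GL \<omega> = j}) = (x \<in> {\<omega> \<in> space M. Dn (\<lambda>k j. E k j \<omega>) = N0 - j})"
    using AE_pos
  proof (eventually_elim)
    case (elim \<omega>)
    show ?case using GL_eq[OF elim] Dn_le[of "\<lambda>k j. E k j \<omega>"] j by auto
  qed
  show "{\<omega> \<in> space M. GL \<omega> = j} \<in> sets M"
    using GL_meas by (simp add: measurable_count_space_eq2_countable vimage_def Int_def conj_commute)
  show "{\<omega> \<in> space M. Dn (\<lambda>k j. E k j \<omega>) = N0 - j} \<in> sets M" by (rule Dn_sets)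
qed

end


locale full = pmodel n N0 N1 vv l M E for n N0 N1 vv l and M :: "'a measure" and E +
  fixes NN :: "'b measure" and E' :: "nat \<Rightarrow> 'b \<Rightarrow> real" and Z :: "'b \<Rightarrow> real"
  assumes N_prob: "prob_space NN"
    and E'_exp: "\<And>k. k \<le> N0 \<Longrightarrow> distributed NN lborel (E' k) (exponential_density 1)"
    and EZ_indep: "prob_space.indep_vars NN (\<lambda>_. borel) (\<lambda>i. if i = Suc N0 then Z else E' i) {..Suc N0}"
    and Z_law: "\<And>j. j \<le> N0 \<Longrightarrow> measure NN {\<omega> \<in> space NN. Z \<omega> = real j} =
        measure M {\<omega> \<in> space M. fst (path n (nl_rate n N0 N1 vv) vv N0 l (\<lambda>k j. E k j \<omega>)
                 (revT n (nl_rate n N0 N1 vv) vv N0 l (\<lambda>k j. E k j \<omega>))) = j}"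
begin

sublocale PN: prob_space NN by (rule N_prob)

definition "Y i = (if i = Suc N0 then Z else E' i)"

lemma Y_meas: "i \<le> Suc N0 \<Longrightarrow> Y i \<in> borel_measurable NN"
  using EZ_indep unfolding PN.indep_vars_def Y_def by auto

lemma Z_meas[measurable]: "Z \<in> borel_measurable NN"
  using Y_meas[of "Suc N0"] unfolding Y_def by simp

lemma E'_meas: "k \<le> N0 \<Longrightarrow> E' k \<in> borel_measurable NN"
  using Y_meas[of k] unfolding Y_def by simp

definition "FR \<omega> = (\<Sum>k\<le>N0. sqrt (2 * (\<Sum>j\<in>{k..N0}. lam n N0 N1 vv j * E' j \<omega>)) * (if Z \<omega> = real k then 1 else 0))"

lemma FR_meas: "FR \<in> borel_measurable NN"
proof -
  have [measurable]: "E' j \<in> borel_measurable NN" if "j \<le> N0" for j using E'_meas that by simp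
  show ?thesis unfolding FR_def[abs_def] by measurable
qed

definition "SZ gi = {z \<in> space (PiM {Suc N0} (\<lambda>_. borel::real measure)). z (Suc N0) = real gi}"

lemma SZ_sets: "SZ gi \<in> sets (PiM {Suc N0} (\<lambda>_. borel))"
proof -
  have c: "(\<lambda>z. z (Suc N0)) \<in> borel_measurable (PiM {Suc N0} (\<lambda>_. borel::real measure))"
    by (rule measurable_component_singleton) simp
  have "SZ gi = (\<lambda>z. z (Suc N0)) -` {real gi} \<inter> space (PiM {Suc N0} (\<lambda>_. borel))"
    unfolding SZ_def by auto
  also have "\<dots> \<in> sets (PiM {Suc N0} (\<lambda>_. borel))" using c by (rule measurable_sets) simp
  finally show ?thesis .
qed

lemma ivN: "gi \<le> N0 \<Longrightarrow> PN.indep_var (PiM {Suc N0} (\<lambda>_. borel)) (\<lambda>\<omega>. restrict (\<lambda>i. Y i \<omega>) {Suc N0})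
    (PiM {gi..N0} (\<lambda>_. borel)) (\<lambda>\<omega>. restrict (\<lambda>i. Y i \<omega>) {gi..N0})"
  unfolding Y_def[abs_def] by (rule PN.indep_var_restrict[OF EZ_indep]) auto

lemma distr_E': "k \<le> N0 \<Longrightarrow> distr NN borel (E' k) = Exd"
proof -
  assume k: "k \<le> N0"
  have "distr NN borel (E' k) = distr NN lborel (E' k)" by (rule distr_cong) auto
  also have "\<dots> = Exd" by (rule distributed_distr_eq_density[OF E'_exp[OF k]])
  finally show ?thesis .
qed

lemma distrN: "gi \<le> N0 \<Longrightarrow> distr NN (PiM {gi..N0} (\<lambda>_. borel)) (\<lambda>\<omega>. restrict (\<lambda>i. Y i \<omega>) {gi..N0}) = PiM {gi..N0} (\<lambda>_. Exd)"
proof -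
  assume g: "gi \<le> N0"
  have ne: "{gi..N0} \<noteq> {}" using g by simp
  have ind: "PN.indep_vars (\<lambda>_. borel) Y {gi..N0}"
    unfolding Y_def[abs_def] by (rule PN.indep_vars_subset[OF EZ_indep]) auto
  have rv: "Y i \<in> borel_measurable NN" if "i \<in> {gi..N0}" for i using Y_meas that by simp
  have "distr NN (PiM {gi..N0} (\<lambda>_. borel)) (\<lambda>\<omega>. restrict (\<lambda>i. Y i \<omega>) {gi..N0}) = PiM {gi..N0} (\<lambda>i. distr NN borel (Y i))"
    using PN.indep_vars_iff_distr_eq_PiM'[OF ne, where M'="\<lambda>_. borel" and X=Y] ind rv by simp
  also have "\<dots> = PiM {gi..N0} (\<lambda>_. Exd)"
    by (rule PiM_cong) (auto simp: Y_def distr_E')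
  finally show ?thesis .
qed

lemma N_prod:
  assumes g: "gi \<le> N0" and A: "A \<in> sets borel"
  shows "PN.prob {\<omega> \<in> space NN. Z \<omega> = real gi \<and> psi gi (restrict (\<lambda>i. Y i \<omega>) {gi..N0}) \<in> A}
       = PN.prob {\<omega> \<in> space NN. Z \<omega> = real gi} * cq gi A"
proof -
  have "PN.prob {\<omega> \<in> space NN. restrict (\<lambda>i. Y i \<omega>) {Suc N0} \<in> SZ gi \<and> psi gi (restrict (\<lambda>i. Y i \<omega>) {gi..N0}) \<in> A}
     = PN.prob {\<omega> \<in> space NN. restrict (\<lambda>i. Y i \<omega>) {Suc N0} \<in> SZ gi} * cq gi A"
    unfolding cq_def by (rule PN.indep_prod_lemma[OF ivN[OF g] SZ_sets distrN[OF g] psi_meas' A])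
  moreover have "restrict (\<lambda>i. Y i \<omega>) {Suc N0} \<in> SZ gi \<longleftrightarrow> Z \<omega> = real gi" for \<omega>
    unfolding SZ_def by (auto simp: Y_def space_PiM)
  ultimately show ?thesis by simp
qed

lemma FR_eq:
  assumes "gi \<le> N0" "Z \<omega> = real gi"
  shows "FR \<omega> = psi gi (restrict (\<lambda>i. Y i \<omega>) {gi..N0})"
proof -
  have "FR \<omega> = (\<Sum>k\<le>N0. if k = gi then sqrt (2 * (\<Sum>j\<in>{k..N0}. lam n N0 N1 vv j * E' j \<omega>)) else 0)"
    unfolding FR_def using assms(2) by (intro sum.cong) auto
  also have "\<dots> = sqrt (2 * (\<Sum>j\<in>{gi..N0}. lam n N0 N1 vv j * E' j \<omega>))"
    using assms(1) by (simp add: sum.delta')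
  also have "\<dots> = psi gi (restrict (\<lambda>i. Y i \<omega>) {gi..N0})"
    unfolding psi_def by (intro arg_cong[where f=sqrt] arg_cong[where f="\<lambda>x. 2 * x"] sum.cong) (auto simp: Y_def)
  finally show ?thesis .
qed

lemma Zsets: "{\<omega> \<in> space NN. Z \<omega> = real gi} \<in> sets NN" by measurable

lemma Z_total: "PN.prob (\<Union>gi\<in>{..N0}. {\<omega> \<in> space NN. Z \<omega> = real gi}) = 1"
proof -
  have "PN.prob (\<Union>gi\<in>{..N0}. {\<omega> \<in> space NN. Z \<omega> = real gi}) = (\<Sum>gi\<le>N0. PN.prob {\<omega> \<in> space NN. Z \<omega> = real gi})"
    by (rule PN.finite_measure_finite_Union) (use Zsets in \<open>auto simp: disjoint_family_on_def\<close>)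
  also have "\<dots> = (\<Sum>gi\<le>N0. PM.prob {\<omega> \<in> space M. Dn (\<lambda>k j. E k j \<omega>) = N0 - gi})"
    using Z_law G_law by (intro sum.cong) auto
  also have "\<dots> = (\<Sum>d\<le>N0. PM.prob {\<omega> \<in> space M. Dn (\<lambda>k j. E k j \<omega>) = d})"
    using sum.atLeastAtMost_rev[of "\<lambda>d. PM.prob {\<omega> \<in> space M. Dn (\<lambda>k j. E k j \<omega>) = d}" 0 N0]
    by (simp add: atMost_atLeast0)
  also have "\<dots> = 1" by (rule Dn_total)
  finally show ?thesis .
qed

lemma RHS:
  assumes A: "A \<in> sets borel"
  shows "PN.prob {\<omega> \<in> space NN. FR \<omega> \<in> A} = (\<Sum>gi\<le>N0. PN.prob {\<omega> \<in> space NN. Z \<omega> = real gi} * cq gi A)"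
proof -
  define B where "B gi = {\<omega> \<in> space NN. Z \<omega> = real gi \<and> psi gi (restrict (\<lambda>i. Y i \<omega>) {gi..N0}) \<in> A}" for gi
  have Bs: "B gi \<in> sets NN" if "gi \<le> N0" for gi
  proof -
    have Ym: "(\<lambda>\<omega>. restrict (\<lambda>i. Y i \<omega>) {gi..N0}) \<in> measurable NN (PiM {gi..N0} (\<lambda>_. borel))"
      by (rule measurable_restrict) (use Y_meas that in auto)
    have pm: "(\<lambda>\<omega>. psi gi (restrict (\<lambda>i. Y i \<omega>) {gi..N0})) \<in> borel_measurable NN"
      using measurable_comp[OF Ym psi_meas'] by (simp add: comp_def)
    have "B gi = {\<omega> \<in> space NN. Z \<omega> = real gi} \<inter> ((\<lambda>\<omega>. psi gi (restrict (\<lambda>i. Y i \<omega>) {gi..N0})) -` A \<inter> space NN)"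
      unfolding B_def by auto
    also have "\<dots> \<in> sets NN" using Zsets measurable_sets[OF pm A] by (rule sets.Int)
    finally show ?thesis .
  qed
  have fs: "{\<omega> \<in> space NN. FR \<omega> \<in> A} \<in> sets NN"
    using measurable_sets[OF FR_meas A] by (simp add: vimage_def Int_def conj_commute)
  have AEZ: "AE \<omega> in NN. \<omega> \<in> (\<Union>gi\<in>{..N0}. {\<omega> \<in> space NN. Z \<omega> = real gi})"
    by (rule PN.AE_prob_1[OF Z_total])
  have "PN.prob {\<omega> \<in> space NN. FR \<omega> \<in> A} = PN.prob (\<Union>gi\<in>{..N0}. B gi)"
  proof (rule PN.finite_measure_eq_AE)
    show "AE x in NN. (x \<in> {\<omega> \<in> space NN. FR \<omega> \<in> A}) = (x \<in> (\<Union>gi\<in>{..N0}. B gi))"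
      using AEZ
    proof (eventually_elim)
      case (elim \<omega>)
      then obtain gi where gi: "gi \<le> N0" "Z \<omega> = real gi" "\<omega> \<in> space NN" by auto
      show ?case using FR_eq[OF gi(1,2)] gi unfolding B_def by auto
    qed
  qed (use fs Bs in auto)
  also have "\<dots> = (\<Sum>gi\<le>N0. PN.prob (B gi))"
    by (rule PN.finite_measure_finite_Union) (use Bs in \<open>auto simp: disjoint_family_on_def B_def\<close>)
  also have "\<dots> = (\<Sum>gi\<le>N0. PN.prob {\<omega> \<in> space NN. Z \<omega> = real gi} * cq gi A)"
    unfolding B_def by (intro sum.cong refl N_prod A) simp
  finally show ?thesis .
qed

theorem main:
  shows "(\<lambda>\<omega>. fL \<omega>) \<in> borel_measurable M \<and> distr M borel (\<lambda>\<omega>. fL \<omega>) = distr NN borel FR"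
proof
  show fm: "(\<lambda>\<omega>. fL \<omega>) \<in> borel_measurable M" by (rule fL_meas)
  show "distr M borel (\<lambda>\<omega>. fL \<omega>) = distr NN borel FR"
  proof (rule measure_eqI)
    show "sets (distr M borel (\<lambda>\<omega>. fL \<omega>)) = sets (distr NN borel FR)" by simp
    fix A assume "A \<in> sets (distr M borel (\<lambda>\<omega>. fL \<omega>))"
    then have A: "A \<in> sets borel" by simp
    have "PM.prob {\<omega> \<in> space M. fL \<omega> \<in> A} = PN.prob {\<omega> \<in> space NN. FR \<omega> \<in> A}"
    proof -
      have "PN.prob {\<omega> \<in> space NN. FR \<omega> \<in> A} = (\<Sum>gi\<le>N0. PM.prob {\<omega> \<in> space M. Dn (\<lambda>k j. E k j \<omega>) = N0 - gi} * cq gi A)"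
        unfolding RHS[OF A] using Z_law G_law by (intro sum.cong) auto
      also have "\<dots> = (\<Sum>d\<le>N0. PM.prob {\<omega> \<in> space M. Dn (\<lambda>k j. E k j \<omega>) = d} * cq (N0 - d) A)"
        using sum.atLeastAtMost_rev[of "\<lambda>d. PM.prob {\<omega> \<in> space M. Dn (\<lambda>k j. E k j \<omega>) = d} * cq (N0 - d) A" 0 N0]
        by (simp add: atMost_atLeast0)
      finally show ?thesis unfolding LHS[OF A] by simp
    qed
    moreover have "emeasure (distr M borel (\<lambda>\<omega>. fL \<omega>)) A = ennreal (PM.prob {\<omega> \<in> space M. fL \<omega> \<in> A})"
      using fm A by (simp add: emeasure_distr PM.emeasure_eq_measure vimage_def Int_def conj_commute)
    moreover have "emeasure (distr NN borel FR) A = ennreal (PN.prob {\<omega> \<in> space NN. FR \<omega> \<in> A})"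
      using FR_meas A by (simp add: emeasure_distr PN.emeasure_eq_measure vimage_def Int_def conj_commute)
    ultimately show "emeasure (distr M borel (\<lambda>\<omega>. fL \<omega>)) A = emeasure (distr NN borel FR) A" by simp
  qed
qed

end

theorem mainTheorem6:
  fixes N0 N1 :: "nat \<Rightarrow> nat" and v :: "nat \<Rightarrow> nat \<Rightarrow> real"
    and M :: "'a measure" and E :: "nat \<Rightarrow> nat \<Rightarrow> 'a \<Rightarrow> real"
    and n :: nat and l :: real
    and N :: "'b measure" and E' :: "nat \<Rightarrow> 'b \<Rightarrow> real" and Z :: "'b \<Rightarrow> real"
  assumes N0_small: "\<And>m. 2 \<le> m \<Longrightarrow> 2 * N0 m < m"
    and N1_small: "\<And>m. 2 \<le> m \<Longrightarrow> 2 * N1 m < m"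
    and N0_lim: "(\<lambda>m. real (N0 m) / real m) \<longlonglongrightarrow> 0"
    and N1_lim: "(\<lambda>m. real (N1 m) / real m) \<longlonglongrightarrow> 0"
    and v_pos: "\<And>m j. 2 \<le> m \<Longrightarrow> j \<le> N0 m \<Longrightarrow> 0 < v m j"
    and v_neg: "\<And>m j. 2 \<le> m \<Longrightarrow> m - N1 m \<le> j \<Longrightarrow> j \<le> m \<Longrightarrow> v m j < 0"
    and v_zero: "\<And>m j. 2 \<le> m \<Longrightarrow> N0 m < j \<Longrightarrow> j < m - N1 m \<Longrightarrow> v m j = 0"
    and v_sum0: "\<And>m. 2 \<le> m \<Longrightarrow> (\<Sum>j\<le>N0 m. v m j) = real m"
    and v_sum1: "\<And>m. 2 \<le> m \<Longrightarrow> (\<Sum>j\<le>N1 m. \<bar>v m (m - j)\<bar>) = real m"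
    and F': "\<And>m j. 2 \<le> m \<Longrightarrow> j < N0 m \<Longrightarrow> v m (Suc j) \<le> v m j \<and> 0 < v m (Suc j)"
    and M_prob: "prob_space M"
    and E_indep: "prob_space.indep_vars M (\<lambda>_. borel) (\<lambda>(k, j). E k j) UNIV"
    and E_exp: "\<And>k j. distributed M lborel (E k j) (exponential_density 1)"
    and n2: "2 \<le> n" and l_neg: "l < 0"
    and N_prob: "prob_space N"
    and E'_exp: "\<And>k. k \<le> N0 n \<Longrightarrow> distributed N lborel (E' k) (exponential_density 1)"
    and EZ_indep: "prob_space.indep_vars N (\<lambda>_. borel)
                    (\<lambda>i. if i = Suc (N0 n) then Z else E' i) {..Suc (N0 n)}"
    and Z_law: "\<And>j. j \<le> N0 n \<Longrightarrow>
        measure N {\<omega> \<in> space N. Z \<omega> = real j} =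
        measure M {\<omega> \<in> space M.
          fst (path n (nl_rate n (N0 n) (N1 n) (v n)) (v n) (N0 n) l (\<lambda>k j. E k j \<omega>)
                 (revT n (nl_rate n (N0 n) (N1 n) (v n)) (v n) (N0 n) l (\<lambda>k j. E k j \<omega>))) = j}"
  shows "(\<lambda>\<omega>. snd (path n (nl_rate n (N0 n) (N1 n) (v n)) (v n) (N0 n) l (\<lambda>k j. E k j \<omega>)
              (exitT n (nl_rate n (N0 n) (N1 n) (v n)) (v n) (N0 n) l {..N0 n} (\<lambda>k j. E k j \<omega>))))
           \<in> borel_measurable M
       \<and> distr M borel (\<lambda>\<omega>. snd (path n (nl_rate n (N0 n) (N1 n) (v n)) (v n) (N0 n) l (\<lambda>k j. E k j \<omega>)
              (exitT n (nl_rate n (N0 n) (N1 n) (v n)) (v n) (N0 n) l {..N0 n} (\<lambda>k j. E k j \<omega>))))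
         = distr N borel (\<lambda>\<omega>. \<Sum>k\<le>N0 n.
              sqrt (2 * (\<Sum>j\<in>{k..N0 n}. lam n (N0 n) (N1 n) (v n) j * E' j \<omega>))
              * (if Z \<omega> = real k then 1 else 0))"
  proof -
  have N0n: "N0 n < n" using N0_small[OF n2] by simp
  have fl: "full n (N0 n) (N1 n) (v n) l M E N E' Z"
    unfolding full_def full_axioms_def pmodel_def pmodel_axioms_def model_def
    using N0n v_pos[OF n2] l_neg M_prob E_indep E_exp N_prob E'_exp EZ_indep Z_law by simp
  interpret full n "N0 n" "N1 n" "v n" l M E N E' Z by (rule fl)
  show ?thesis using main unfolding FR_def[abs_def] .
qed

end
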